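(* Let $\mathfrak L=\mathbb V\oplus\mathbb W$ be a color gLt-algebra admitting a quasi-multiplicative basis $\mathfrak B=\{e_i\}_{i\in I}$ of $\mathbb W\neq0$. Then $$\mathfrak L=\mathcal U\oplus\Big(\sum_{[i]\in I/\sim}\mathfrak J_{[i]}\Big),$$ where $\mathcal U$ is a linear complement of $\sum_{[i]\in I/\sim}\mathbb V_{[i]}$ in $\mathbb V$ and each $\mathfrak J_{[i]}$ is a color gLt-ideal of $\mathfrak L$ admitting a quasi-multiplicative basis inherited by the one of $\mathfrak L$. Furthermore, $\langle\mathfrak J_{[i]},\mathfrak J_{[h]},\mathfrak L,\dots,\mathfrak L\rangle_\sigma=0$ for every $\sigma\in\mathbb S_n$ whenever $[i]\neq[h]$.
   Context: Let $\mathbb F$ be a field, $\mathbb G$ an abelian group, $n\ge 2$, and $\epsilon:\mathbb G\times\mathbb G\to\mathbb F\setminus\{0\}$ a bicharacter ($\epsilon(k,g+h)=\epsilon(k,g)\epsilon(k,h)$, $\epsilon(g+h,k)=\epsilon(g,k)\epsilon(h,k)$, $\epsilon(g,h)\epsilon(h,g)=1$). A graded $n$-ary algebra is a $\mathbb G$-graded vector space $\mathfrak L=\bigoplus_{g\in\mathbb G}\mathfrak L_g$ with an $n$-linear map $\langle\cdot,\dots,\cdot\rangle:\mathfrak L^n\to\mathfrak L$ such that $\langle\mathfrak L_{g_1},\dots,\mathfrak L_{g_n}\rangle\subset\mathfrak L_{g_1+\dots+g_n}$. For $\sigma\in\mathbb S_n$ write $\langle x_1,\dots,x_n\rangle_\sigma:=\langle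 x_{\sigma(1)},\dots,x_{\sigma(n)}\rangle$; for subsets $A_1,\dots,A_n$, $\langle A_1,\dots,A_n\rangle_\sigma$ denotes the linear span of all $\langle x_1,\dots,x_n\rangle_\sigma$ with $x_r\in A_r$. A color gLt-algebra is a graded $n$-ary algebra satisfying, for each $k=1,\dots,n$ and fixed scalars $\alpha^{\sigma_1,\sigma_2}_{i,j,k}\in\mathbb F$, the color version (each term on the right multiplied by the product of values of $\epsilon$ on the degrees of the homogeneous arguments transposed in passing from the left-hand order to the order of that term) of the identity $\langle y_1,\dots,y_{k-1},\langle x_1,\dots,x_n\rangle,y_k,\dots,y_{n-1}\rangle=\sum_{1\le i,j\le n,\,\sigma_1\in\mathbb S_n,\,\sigma_2\in\mathbb S_{n-1}}\alpha^{\sigma_1,\sigma_2}_{i,j,k}\langle x_{\sigma_1(1)},\dots,x_{\sigma_1(i-1)},\langle y_{\sigma_2(1)},\dots,y_{\sigma_2(j-1)},x_{\sigma_1(i)},y_{\sigma_2(j)},\dots,y_{\sigma_2(n-1)}\rangle,x_{\sigma_1(i+1)},\dots,x_{\sigma_1(n)}\rangle$. A $\mathbb G$-graded subspace $\mathcal I\subset\mathfrak L$ is a color gLt-ideal if $\langle\mathcal I,\mathfrak L,\dots,\mathfrak L\rangle_\sigma\subset\mathcal I$ for every $\sigma\in\mathbb S_n$. $\mathfrak L$ admits a quasi-multiplicative basis if $\mathfrak L=\mathbb V\oplus\mathbb W$ with $\mathbb V$, $\mathbb W\ne0$ graded subspaces and $\mathfrak B=\{e_i\}_{i\in I}$ a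 basis of homogeneous elements of $\mathbb W$ such that: (1) for $i_1,\dots,i_n\in I$, either $\langle e_{i_1},\dots,e_{i_n}\rangle\in\mathbb Fe_j$ for some $j\in I$ or $\langle e_{i_1},\dots,e_{i_n}\rangle\in\mathbb V$; (2) for $0<k<n$, $i_1,\dots,i_k\in I$ and $\sigma\in\mathbb S_n$, $\langle e_{i_1},\dots,e_{i_k},\mathbb V,\dots,\mathbb V\rangle_\sigma\subset\mathbb Fe_{j_\sigma}$ for some $j_\sigma\in I$; (3) either $\langle\mathbb V,\dots,\mathbb V\rangle\subset\mathbb Fe_j$ for some $j\in I$ or $\langle\mathbb V,\dots,\mathbb V\rangle\subset\mathbb V$. A graded subalgebra (or ideal) $\mathfrak S$ has a quasi-multiplicative basis inherited by the one of $\mathfrak L$ if $\mathfrak S=\mathbb V_{\mathfrak S}\oplus\mathbb W_{\mathfrak S}$ with $\mathbb V_{\mathfrak S}$ a graded subspace of $\mathbb V$ and $0\ne\mathbb W_{\mathfrak S}$ a graded subspace of $\mathbb W$ admitting a subset $\mathfrak B'\subset\mathfrak B$ as a basis. Index maps: let $v$ be a symbol not in $I$, $\mathfrak I:=I\,\dot\cup\,\{v\}$; for each $j\in\mathfrak I$ take a new symbol $\overline j$, $\overline I:=\{\overline i:i\in I\}$, $\overline{\mathfrak I}:=\overline I\,\dot\cup\,\{\overline v\}$; set $\overline{(\overline j)}:=j$, $\overline J:=\{\overline j:j\in J\}$ for a set $J$ of symbols ($\overline\emptyset=\emptyset$). Put $u_j:=e_j$ for $j\in I$ and $u_v:=\mathbb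 V$. For $\sigma\in\mathbb S_n$ and $(j_1,\dots,j_n)\in\mathfrak I^n$ let $a_\sigma(j_1,\dots,j_n)=\{r\}$ if $r\in I$ and $0\ne\langle u_{j_1},\dots,u_{j_n}\rangle_\sigma\subset\mathbb Fe_r$, $=\{v\}$ if $0\ne\langle u_{j_1},\dots,u_{j_n}\rangle_\sigma\subset\mathbb V$, and $=\emptyset$ otherwise. For $j,j_2,\dots,j_n\in\mathfrak I$ let $b_\sigma(j,\overline j_2,\dots,\overline j_n):=\{x\in\mathfrak I: a_\sigma(x,j_2,\dots,j_n)=\{j\}\}$. Define $\mu$ on $(\mathfrak I\,\dot\cup\,\overline{\mathfrak I})\times(\mathfrak I^{n-1}\,\dot\cup\,\overline{\mathfrak I}^{n-1})$ with values subsets of $\mathfrak I$ by: $\mu(j,j_1,\dots,j_{n-1})=\bigcup_{\sigma\in\mathbb S_n}a_\sigma(j,j_1,\dots,j_{n-1})$ for $j,j_1,\dots,j_{n-1}\in\mathfrak I$; $\mu(j,\overline j_1,\dots,\overline j_{n-1})=\bigcup_{\sigma\in\mathbb S_n}b_\sigma(j,\overline j_1,\dots,\overline j_{n-1})$ for $j,j_1,\dots,j_{n-1}\in\mathfrak I$; $\mu(\overline j,j_1,\dots,j_{n-1})=\bigcup_{1\le k\le n-1,\ \sigma\in\mathbb S_n}b_\sigma(j_k,\overline j,\overline j_1,\dots,\overline j_{k-1},\overline j_{k+1},\dots,\overline j_{n-1})$ for $j,j_1,\dots,j_{n-1}\in\mathfrak I$; and $\mu(\overline j,\overline j_1,\dots,\overline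 j_{n-1})=\emptyset$. Define $\phi$ on pairs $(J,X)$ with $J\subset I\,\dot\cup\,\overline I$ and $X\in\mathfrak I^{n-1}\,\dot\cup\,\overline{\mathfrak I}^{n-1}$ by $\phi(\emptyset,X)=\emptyset$ and, for $J\ne\emptyset$, $\phi(J,X):=K\cup\overline K$ where $K:=\big(\bigcup_{j\in J}\mu(j,X)\big)\setminus\{v\}$. Connections: for distinct $i,j\in I$, $i$ is connected to $j$ if there exist $t\ge1$, $X_1,\dots,X_t\in\mathfrak I^{n-1}\,\dot\cup\,\overline{\mathfrak I}^{n-1}$ and $\widetilde i\in\{i,\overline i\}$ such that $\phi(\{\widetilde i\},X_1)\ne\emptyset$, …, $\phi(\cdots\phi(\{\widetilde i\},X_1)\cdots,X_{t-1})\ne\emptyset$, and $j\in\phi(\cdots\phi(\phi(\{\widetilde i\},X_1),X_2)\cdots,X_t)$; every $i$ is connected to itself. Being connected is an equivalence relation $\sim$ on $I$; $[i]$ denotes the class of $i$. Define $\mathbb V_{[i]}:=\big(\sum_{i_1,\dots,i_n\in[i]}\mathbb F\langle e_{i_1},\dots,e_{i_n}\rangle\big)\cap\mathbb V$, $\mathbb W_{[i]}:=\bigoplus_{j\in[i]}\mathbb Fe_j$, and $\mathfrak J_{[i]}:=\mathbb V_{[i]}\oplus\mathbb W_{[i]}$. *)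

theory Defs
  imports Complex_Main "HOL-Combinatorics.Permutations"
begin

text \<open>
The field is a type 'f :: field, the graded algebra is the whole type 'v
(an abelian group with a scalar multiplication  scale  making it an 'f-vector space in the
sense of the locale  vector_space  of HOL.Vector_Spaces), the grading group is a type
'g :: ab_group_add.  The n-ary product is a function  prd :: 'v list => 'v  of which only
the values on lists of length n matter.  Positions are 0-based: positions 0..n-1.
Symmetric group S_n = permutations of {..<n}.
\<close>

definition graded_vs :: "('f::field \<Rightarrow> 'v::ab_group_add \<Rightarrow> 'v) \<Rightarrow> ('g \<Rightarrow> 'v set) \<Rightarrow> bool" where
  "graded_vs scale Lg \<longleftrightarrow>
     vector_space scale \<and>
     (\<forall>g. module.subspace scale (Lg g)) \<and>
     (\<forall>x. \<exists>!c. finite {g. c g \<noteq> 0} \<and> (\<forall>g. c g \<in> Lg g) \<and> x = sum c {g. c g \<noteq> 0})"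

definition hom_decomp :: "('g \<Rightarrow> 'v set) \<Rightarrow> 'v::ab_group_add \<Rightarrow> ('g \<Rightarrow> 'v) \<Rightarrow> bool" where
  "hom_decomp Lg x c \<longleftrightarrow> finite {g. c g \<noteq> 0} \<and> (\<forall>g. c g \<in> Lg g) \<and> x = sum c {g. c g \<noteq> 0}"

definition graded_subspace :: "('f::field \<Rightarrow> 'v::ab_group_add \<Rightarrow> 'v) \<Rightarrow> ('g \<Rightarrow> 'v set) \<Rightarrow> 'v set \<Rightarrow> bool" where
  "graded_subspace scale Lg S \<longleftrightarrow>
     module.subspace scale S \<and> (\<forall>x\<in>S. \<forall>c. hom_decomp Lg x c \<longrightarrow> (\<forall>g. c g \<in> S))"

definition homogeneous :: "('g \<Rightarrow> 'v set) \<Rightarrow> 'v \<Rightarrow> bool" where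
  "homogeneous Lg x \<longleftrightarrow> (\<exists>g. x \<in> Lg g)"

definition setsum2 :: "'v::ab_group_add set \<Rightarrow> 'v set \<Rightarrow> 'v set" where
  "setsum2 A B = {a + b | a b. a \<in> A \<and> b \<in> B}"

definition direct_sum_eq :: "'v::ab_group_add set \<Rightarrow> 'v set \<Rightarrow> 'v set \<Rightarrow> bool" where
  "direct_sum_eq S A B \<longleftrightarrow> S = setsum2 A B \<and> A \<inter> B = {0}"

definition bicharacter :: "('g::ab_group_add \<Rightarrow> 'g \<Rightarrow> 'f::field) \<Rightarrow> bool" where
  "bicharacter \<epsilon> \<longleftrightarrow>
     (\<forall>g h. \<epsilon> g h \<noteq> 0) \<and>
     (\<forall>k g h. \<epsilon> k (g + h) = \<epsilon> k g * \<epsilon> k h) \<and>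
     (\<forall>k g h. \<epsilon> (g + h) k = \<epsilon> g k * \<epsilon> h k) \<and>
     (\<forall>g h. \<epsilon> g h * \<epsilon> h g = 1)"

definition graded_nary_algebra ::
  "('f::field \<Rightarrow> 'v::ab_group_add \<Rightarrow> 'v) \<Rightarrow> ('g::ab_group_add \<Rightarrow> 'v set) \<Rightarrow> nat \<Rightarrow> ('v list \<Rightarrow> 'v) \<Rightarrow> bool" where
  "graded_nary_algebra scale Lg n prd \<longleftrightarrow>
     graded_vs scale Lg \<and>
     (\<forall>xs. length xs = n \<longrightarrow> (\<forall>r<n. Vector_Spaces.linear scale scale (\<lambda>x. prd (xs[r := x])))) \<and>
     (\<forall>xs ds. length xs = n \<longrightarrow> (\<forall>r<n. xs ! r \<in> Lg (ds r)) \<longrightarrow> prd xs \<in> Lg (\<Sum>r<n. ds r))"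

definition prod_perm :: "nat \<Rightarrow> ('v list \<Rightarrow> 'v) \<Rightarrow> (nat \<Rightarrow> nat) \<Rightarrow> 'v list \<Rightarrow> 'v" where
  "prod_perm n prd \<sigma> xs = prd (map (\<lambda>t. xs ! \<sigma> t) [0..<n])"

definition prod_sets ::
  "('f::field \<Rightarrow> 'v::ab_group_add \<Rightarrow> 'v) \<Rightarrow> nat \<Rightarrow> ('v list \<Rightarrow> 'v) \<Rightarrow> (nat \<Rightarrow> nat) \<Rightarrow> 'v set list \<Rightarrow> 'v set" where
  "prod_sets scale n prd \<sigma> As =
     module.span scale {prod_perm n prd \<sigma> xs | xs. length xs = n \<and> (\<forall>r<n. xs ! r \<in> As ! r)}"

text \<open>Colour factor: the elements of a word are labelled; passing from the order  old  to the
order  new  (a rearrangement of the same distinct labels) every pair of labels (u,w) with u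
before w in  old  but w before u in  new  contributes the factor eps(deg u, deg w).\<close>
definition pos_in :: "'l list \<Rightarrow> 'l \<Rightarrow> nat" where
  "pos_in xs x = (LEAST p. p < length xs \<and> xs ! p = x)"

definition color_factor ::
  "('g \<Rightarrow> 'g \<Rightarrow> 'f::field) \<Rightarrow> ('l \<Rightarrow> 'g) \<Rightarrow> 'l list \<Rightarrow> 'l list \<Rightarrow> 'f" where
  "color_factor \<epsilon> deg old new =
     (\<Prod>(a, b) \<in> {(a, b). a < b \<and> b < length old \<and> pos_in new (old ! b) < pos_in new (old ! a)}.
        \<epsilon> (deg (old ! a)) (deg (old ! b)))"

text \<open>Labels: Inl r stands for x_r (r < n), Inr s for y_s (s < n-1).  k is the 0-based
insertion position (k = 0..n-1, corresponding to k+1 = 1..n in the paper); i, j are 0-based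
(i = 0..n-1 corresponding to i+1, and j = 0..n-1 corresponding to j+1).\<close>

definition gLt_lhs_labels :: "nat \<Rightarrow> nat \<Rightarrow> (nat + nat) list" where
  "gLt_lhs_labels n k = map Inr [0..<k] @ map Inl [0..<n] @ map Inr [k..<n - 1]"

definition gLt_rhs_labels :: "nat \<Rightarrow> nat \<Rightarrow> nat \<Rightarrow> (nat \<Rightarrow> nat) \<Rightarrow> (nat \<Rightarrow> nat) \<Rightarrow> (nat + nat) list" where
  "gLt_rhs_labels n i j \<sigma>1 \<sigma>2 =
     map (\<lambda>t. Inl (\<sigma>1 t)) [0..<i] @ map (\<lambda>t. Inr (\<sigma>2 t)) [0..<j] @ [Inl (\<sigma>1 i)]
     @ map (\<lambda>t. Inr (\<sigma>2 t)) [j..<n - 1] @ map (\<lambda>t. Inl (\<sigma>1 t)) [Suc i..<n]"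

definition gLt_lhs :: "nat \<Rightarrow> ('v list \<Rightarrow> 'v) \<Rightarrow> nat \<Rightarrow> 'v list \<Rightarrow> 'v list \<Rightarrow> 'v" where
  "gLt_lhs n prd k xs ys = prd (take k ys @ [prd xs] @ drop k ys)"

definition gLt_rhs_term ::
  "nat \<Rightarrow> ('v list \<Rightarrow> 'v) \<Rightarrow> nat \<Rightarrow> nat \<Rightarrow> (nat \<Rightarrow> nat) \<Rightarrow> (nat \<Rightarrow> nat) \<Rightarrow> 'v list \<Rightarrow> 'v list \<Rightarrow> 'v" where
  "gLt_rhs_term n prd i j \<sigma>1 \<sigma>2 xs ys =
     prd (map (\<lambda>t. xs ! \<sigma>1 t) [0..<i]
           @ [prd (map (\<lambda>t. ys ! \<sigma>2 t) [0..<j] @ [xs ! \<sigma>1 i] @ map (\<lambda>t. ys ! \<sigma>2 t) [j..<n - 1])]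
           @ map (\<lambda>t. xs ! \<sigma>1 t) [Suc i..<n])"

definition color_gLt_algebra ::
  "('f::field \<Rightarrow> 'v::ab_group_add \<Rightarrow> 'v) \<Rightarrow> ('g::ab_group_add \<Rightarrow> 'v set) \<Rightarrow> ('g \<Rightarrow> 'g \<Rightarrow> 'f)
   \<Rightarrow> nat \<Rightarrow> ('v list \<Rightarrow> 'v) \<Rightarrow> bool" where
  "color_gLt_algebra scale Lg \<epsilon> n prd \<longleftrightarrow>
     graded_nary_algebra scale Lg n prd \<and>
     (\<exists>\<alpha> :: nat \<Rightarrow> nat \<Rightarrow> nat \<Rightarrow> (nat \<Rightarrow> nat) \<Rightarrow> (nat \<Rightarrow> nat) \<Rightarrow> 'f.
        \<forall>k<n. \<forall>xs ys dx dy.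
          length xs = n \<longrightarrow> length ys = n - 1 \<longrightarrow>
          (\<forall>r<n. xs ! r \<in> Lg (dx r)) \<longrightarrow> (\<forall>s<n - 1. ys ! s \<in> Lg (dy s)) \<longrightarrow>
          gLt_lhs n prd k xs ys =
            (\<Sum>i<n. \<Sum>j<n. \<Sum>\<sigma>1\<in>{p. p permutes {..<n}}. \<Sum>\<sigma>2\<in>{p. p permutes {..<n - 1}}.
               scale (\<alpha> i j k \<sigma>1 \<sigma>2 *
                      color_factor \<epsilon> (case_sum dx dy) (gLt_lhs_labels n k) (gLt_rhs_labels n i j \<sigma>1 \<sigma>2))
                     (gLt_rhs_term n prd i j \<sigma>1 \<sigma>2 xs ys)))"

definition color_gLt_ideal ::
  "('f::field \<Rightarrow> 'v::ab_group_add \<Rightarrow> 'v) \<Rightarrow> ('g \<Rightarrow> 'v set) \<Rightarrow> nat \<Rightarrow> ('v list \<Rightarrow> 'v) \<Rightarrow> 'v set \<Rightarrow> bool" where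
  "color_gLt_ideal scale Lg n prd J \<longleftrightarrow>
     graded_subspace scale Lg J \<and>
     (\<forall>\<sigma>. \<sigma> permutes {..<n} \<longrightarrow> prod_sets scale n prd \<sigma> (J # replicate (n - 1) UNIV) \<subseteq> J)"

definition line :: "('f::field \<Rightarrow> 'v::ab_group_add \<Rightarrow> 'v) \<Rightarrow> 'v \<Rightarrow> 'v set" where
  "line scale x = range (\<lambda>c. scale c x)"

definition qm_basis ::
  "('f::field \<Rightarrow> 'v::ab_group_add \<Rightarrow> 'v) \<Rightarrow> ('g \<Rightarrow> 'v set) \<Rightarrow> nat \<Rightarrow> ('v list \<Rightarrow> 'v)
   \<Rightarrow> 'v set \<Rightarrow> 'v set \<Rightarrow> 'i set \<Rightarrow> ('i \<Rightarrow> 'v) \<Rightarrow> bool" where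
  "qm_basis scale Lg n prd V W I e \<longleftrightarrow>
     graded_subspace scale Lg V \<and> graded_subspace scale Lg W \<and>
     direct_sum_eq UNIV V W \<and> V \<noteq> {0} \<and> W \<noteq> {0} \<and>
     inj_on e I \<and> \<not> module.dependent scale (e ` I) \<and> module.span scale (e ` I) = W \<and>
     (\<forall>i\<in>I. homogeneous Lg (e i)) \<and>
     (\<forall>ks. length ks = n \<longrightarrow> set ks \<subseteq> I \<longrightarrow>
        (\<exists>j\<in>I. prd (map e ks) \<in> line scale (e j)) \<or> prd (map e ks) \<in> V) \<and>
     (\<forall>k ks \<sigma>. 0 < k \<longrightarrow> k < n \<longrightarrow> length ks = k \<longrightarrow> set ks \<subseteq> I \<longrightarrow> \<sigma> permutes {..<n} \<longrightarrow>
        (\<exists>j\<in>I. prod_sets scale n prd \<sigma> (map (\<lambda>i. {e i}) ks @ replicate (n - k) V) \<subseteq> line scale (e j))) \<and>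
     ((\<exists>j\<in>I. prod_sets scale n prd id (replicate n V) \<subseteq> line scale (e j)) \<or>
       prod_sets scale n prd id (replicate n V) \<subseteq> V)"

definition inherited_qm_basis ::
  "('f::field \<Rightarrow> 'v::ab_group_add \<Rightarrow> 'v) \<Rightarrow> ('g \<Rightarrow> 'v set) \<Rightarrow> 'v set \<Rightarrow> 'v set \<Rightarrow> 'i set \<Rightarrow> ('i \<Rightarrow> 'v)
   \<Rightarrow> 'v set \<Rightarrow> bool" where
  "inherited_qm_basis scale Lg V W I e S \<longleftrightarrow>
     (\<exists>VS WS I'. graded_subspace scale Lg VS \<and> VS \<subseteq> V \<and>
        graded_subspace scale Lg WS \<and> WS \<subseteq> W \<and> WS \<noteq> {0} \<and>
        I' \<subseteq> I \<and> \<not> module.dependent scale (e ` I') \<and> module.span scale (e ` I') = WS \<and>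
        direct_sum_eq S VS WS)"

text \<open>The set frak I = I disjoint-union {v} is modelled by 'i option, None playing the role of v.
Barred symbols are modelled by pairs (True, j); unbarred by (False, j).\<close>

definition Iv :: "'i set \<Rightarrow> 'i option set" where
  "Iv I = insert None (Some ` I)"

definition u_set :: "'v set \<Rightarrow> ('i \<Rightarrow> 'v) \<Rightarrow> 'i option \<Rightarrow> 'v set" where
  "u_set V e j = (case j of None \<Rightarrow> V | Some i \<Rightarrow> {e i})"

definition a_map ::
  "('f::field \<Rightarrow> 'v::ab_group_add \<Rightarrow> 'v) \<Rightarrow> nat \<Rightarrow> ('v list \<Rightarrow> 'v) \<Rightarrow> 'v set \<Rightarrow> 'i set \<Rightarrow> ('i \<Rightarrow> 'v)
   \<Rightarrow> (nat \<Rightarrow> nat) \<Rightarrow> 'i option list \<Rightarrow> 'i option set" where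
  "a_map scale n prd V I e \<sigma> js =
     (let P = prod_sets scale n prd \<sigma> (map (u_set V e) js) in
      {Some r | r. r \<in> I \<and> P \<noteq> {0} \<and> P \<subseteq> line scale (e r)} \<union>
      (if P \<noteq> {0} \<and> P \<subseteq> V then {None} else {}))"

definition b_map ::
  "('f::field \<Rightarrow> 'v::ab_group_add \<Rightarrow> 'v) \<Rightarrow> nat \<Rightarrow> ('v list \<Rightarrow> 'v) \<Rightarrow> 'v set \<Rightarrow> 'i set \<Rightarrow> ('i \<Rightarrow> 'v)
   \<Rightarrow> (nat \<Rightarrow> nat) \<Rightarrow> 'i option \<Rightarrow> 'i option list \<Rightarrow> 'i option set" where
  "b_map scale n prd V I e \<sigma> j js = {x \<in> Iv I. a_map scale n prd V I e \<sigma> (x # js) = {j}}"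

text \<open>mu (bj, j) (bX, js): bj = True means the first argument is barred, bX = True means all
entries of the (n-1)-tuple js are barred.\<close>
definition mu_map ::
  "('f::field \<Rightarrow> 'v::ab_group_add \<Rightarrow> 'v) \<Rightarrow> nat \<Rightarrow> ('v list \<Rightarrow> 'v) \<Rightarrow> 'v set \<Rightarrow> 'i set \<Rightarrow> ('i \<Rightarrow> 'v)
   \<Rightarrow> bool \<times> 'i option \<Rightarrow> bool \<times> 'i option list \<Rightarrow> 'i option set" where
  "mu_map scale n prd V I e J X =
     (case (J, X) of
        ((False, j), (False, js)) \<Rightarrow>
           (\<Union>\<sigma>\<in>{p. p permutes {..<n}}. a_map scale n prd V I e \<sigma> (j # js))
      | ((False, j), (True, js)) \<Rightarrow>
           (\<Union>\<sigma>\<in>{p. p permutes {..<n}}. b_map scale n prd V I e \<sigma> j js)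
      | ((True, j), (False, js)) \<Rightarrow>
           (\<Union>k<n - 1. \<Union>\<sigma>\<in>{p. p permutes {..<n}}.
              b_map scale n prd V I e \<sigma> (js ! k) (j # take k js @ drop (Suc k) js))
      | ((True, j), (True, js)) \<Rightarrow> {})"

definition phi_map ::
  "('f::field \<Rightarrow> 'v::ab_group_add \<Rightarrow> 'v) \<Rightarrow> nat \<Rightarrow> ('v list \<Rightarrow> 'v) \<Rightarrow> 'v set \<Rightarrow> 'i set \<Rightarrow> ('i \<Rightarrow> 'v)
   \<Rightarrow> (bool \<times> 'i option) set \<Rightarrow> bool \<times> 'i option list \<Rightarrow> (bool \<times> 'i option) set" where
  "phi_map scale n prd V I e J X =
     (if J = {} then {}
      else (let K = (\<Union>j\<in>J. mu_map scale n prd V I e j X) - {None} in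
            {(False, k) | k. k \<in> K} \<union> {(True, k) | k. k \<in> K}))"

definition admissible_X :: "nat \<Rightarrow> 'i set \<Rightarrow> bool \<times> 'i option list \<Rightarrow> bool" where
  "admissible_X n I X \<longleftrightarrow> length (snd X) = n - 1 \<and> set (snd X) \<subseteq> Iv I"

definition connected_idx ::
  "('f::field \<Rightarrow> 'v::ab_group_add \<Rightarrow> 'v) \<Rightarrow> nat \<Rightarrow> ('v list \<Rightarrow> 'v) \<Rightarrow> 'v set \<Rightarrow> 'i set \<Rightarrow> ('i \<Rightarrow> 'v)
   \<Rightarrow> 'i \<Rightarrow> 'i \<Rightarrow> bool" where
  "connected_idx scale n prd V I e i j \<longleftrightarrow>
     i \<in> I \<and> j \<in> I \<and>
     (i = j \<or>
      (\<exists>Xs it. Xs \<noteq> [] \<and> (\<forall>X\<in>set Xs. admissible_X n I X) \<and>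
         it \<in> {(False, Some i), (True, Some i)} \<and>
         (\<forall>m. 0 < m \<longrightarrow> m < length Xs \<longrightarrow> foldl (phi_map scale n prd V I e) {it} (take m Xs) \<noteq> {}) \<and>
         (False, Some j) \<in> foldl (phi_map scale n prd V I e) {it} Xs))"

definition conn_class ::
  "('f::field \<Rightarrow> 'v::ab_group_add \<Rightarrow> 'v) \<Rightarrow> nat \<Rightarrow> ('v list \<Rightarrow> 'v) \<Rightarrow> 'v set \<Rightarrow> 'i set \<Rightarrow> ('i \<Rightarrow> 'v)
   \<Rightarrow> 'i \<Rightarrow> 'i set" where
  "conn_class scale n prd V I e i = {j. connected_idx scale n prd V I e i j}"

definition V_class ::
  "('f::field \<Rightarrow> 'v::ab_group_add \<Rightarrow> 'v) \<Rightarrow> nat \<Rightarrow> ('v list \<Rightarrow> 'v) \<Rightarrow> 'v set \<Rightarrow> 'i set \<Rightarrow> ('i \<Rightarrow> 'v)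
   \<Rightarrow> 'i \<Rightarrow> 'v set" where
  "V_class scale n prd V I e i =
     module.span scale {prd (map e ks) | ks. length ks = n \<and> set ks \<subseteq> conn_class scale n prd V I e i} \<inter> V"

definition W_class ::
  "('f::field \<Rightarrow> 'v::ab_group_add \<Rightarrow> 'v) \<Rightarrow> nat \<Rightarrow> ('v list \<Rightarrow> 'v) \<Rightarrow> 'v set \<Rightarrow> 'i set \<Rightarrow> ('i \<Rightarrow> 'v)
   \<Rightarrow> 'i \<Rightarrow> 'v set" where
  "W_class scale n prd V I e i = module.span scale (e ` conn_class scale n prd V I e i)"

definition J_class ::
  "('f::field \<Rightarrow> 'v::ab_group_add \<Rightarrow> 'v) \<Rightarrow> nat \<Rightarrow> ('v list \<Rightarrow> 'v) \<Rightarrow> 'v set \<Rightarrow> 'i set \<Rightarrow> ('i \<Rightarrow> 'v)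
   \<Rightarrow> 'i \<Rightarrow> 'v set" where
  "J_class scale n prd V I e i = setsum2 (V_class scale n prd V I e i) (W_class scale n prd V I e i)"

end

theory Submission
  imports Defs
begin


lemma lin_add: "Vector_Spaces.linear s s f \<Longrightarrow> f (x + y) = f x + f y"
  unfolding Vector_Spaces.linear_iff by blast
lemma lin_scale: "Vector_Spaces.linear s s f \<Longrightarrow> f (s c x) = s c (f x)"
  unfolding Vector_Spaces.linear_iff by blast
lemma lin_zero: "Vector_Spaces.linear s s f \<Longrightarrow> f 0 = 0"
  using lin_add[of s f 0 0] by simp

locale QM =
  fixes scale :: "'f::field \<Rightarrow> 'v::ab_group_add \<Rightarrow> 'v"
    and Lg :: "'g::ab_group_add \<Rightarrow> 'v set"
    and \<epsilon> :: "'g \<Rightarrow> 'g \<Rightarrow> 'f"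
    and n :: nat
    and prd :: "'v list \<Rightarrow> 'v"
    and V W :: "'v set"
    and I :: "'i set"
    and e :: "'i \<Rightarrow> 'v"
  assumes n2: "n \<ge> 2"
    and alg: "color_gLt_algebra scale Lg \<epsilon> n prd"
    and qmb: "qm_basis scale Lg n prd V W I e"
begin

lemma gna: "graded_nary_algebra scale Lg n prd"
  using alg by (simp add: color_gLt_algebra_def)

lemma gvs: "graded_vs scale Lg"
  using gna by (simp add: graded_nary_algebra_def)

lemma vs: "vector_space scale"
  using gvs by (simp add: graded_vs_def)

sublocale vector_space scale by (rule vs)

lemma Lsub: "subspace (Lg g)"
  using gvs by (simp add: graded_vs_def)

lemma lin: "length xs = n \<Longrightarrow> r < n \<Longrightarrow> Vector_Spaces.linear scale scale (\<lambda>x. prd (xs[r := x]))"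
  using gna by (simp add: graded_nary_algebra_def)

lemma deg: "length xs = n \<Longrightarrow> (\<forall>r<n. xs ! r \<in> Lg (ds r)) \<Longrightarrow> prd xs \<in> Lg (\<Sum>r<n. ds r)"
  using gna unfolding graded_nary_algebra_def by blast

lemma Vgs: "graded_subspace scale Lg V" and Wgs: "graded_subspace scale Lg W"
  and VW: "UNIV = setsum2 V W" and VW0: "V \<inter> W = {0}" and Vne: "V \<noteq> {0}" and Wne: "W \<noteq> {0}"
  and einj: "inj_on e I" and eind: "\<not> dependent (e ` I)" and Wspan: "span (e ` I) = W"
  and ehom: "\<And>i. i \<in> I \<Longrightarrow> homogeneous Lg (e i)"
  using qmb by (auto simp: qm_basis_def direct_sum_eq_def)

lemma q1: "length ks = n \<Longrightarrow> set ks \<subseteq> I \<Longrightarrow> (\<exists>j\<in>I. prd (map e ks) \<in> line scale (e j)) \<or> prd (map e ks) \<in> V"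
  using qmb unfolding qm_basis_def by blast

lemma q2: "0 < k \<Longrightarrow> k < n \<Longrightarrow> length ks = k \<Longrightarrow> set ks \<subseteq> I \<Longrightarrow> \<sigma> permutes {..<n} \<Longrightarrow>
        (\<exists>j\<in>I. prod_sets scale n prd \<sigma> (map (\<lambda>i. {e i}) ks @ replicate (n - k) V) \<subseteq> line scale (e j))"
  using qmb unfolding qm_basis_def by blast

lemma q3: "(\<exists>j\<in>I. prod_sets scale n prd id (replicate n V) \<subseteq> line scale (e j)) \<or>
       prod_sets scale n prd id (replicate n V) \<subseteq> V"
  using qmb unfolding qm_basis_def by blast

lemma Vsub: "subspace V" using Vgs by (simp add: graded_subspace_def)
lemma Wsub: "subspace W" using Wgs by (simp add: graded_subspace_def)

lemma line_span: "line scale x = span {x}"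
  by (simp add: line_def span_singleton)

lemma e_in_W: "i \<in> I \<Longrightarrow> e i \<in> W"
  using Wspan span_base by blast

lemma e_nz: "i \<in> I \<Longrightarrow> e i \<noteq> 0"
  using eind dependent_zero by force

lemma line_W: "i \<in> I \<Longrightarrow> line scale (e i) \<subseteq> W"
  unfolding line_span using e_in_W Wsub by (simp add: span_minimal)

lemma line_V: "i \<in> I \<Longrightarrow> line scale (e i) \<inter> V = {0}"
  using line_W VW0 Vsub line_span span_zero by blast

lemma e_notin_V: "i \<in> I \<Longrightarrow> e i \<notin> V"
  using e_in_W VW0 e_nz by blast

lemma line_line: assumes "i \<in> I" "j \<in> I" "i \<noteq> j" "x \<in> line scale (e i)" "x \<in> line scale (e j)"
  shows "x = 0"
proof (rule ccontr)
  assume x0: "x \<noteq> 0"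
  obtain a where a: "x = scale a (e i)" using assms(4) by (auto simp: line_def)
  obtain b where b: "x = scale b (e j)" using assms(5) by (auto simp: line_def)
  have a0: "a \<noteq> 0" using a x0 by auto
  have "e i = scale (inverse a * b) (e j)" using a b a0 by (simp add: scale_scale[symmetric])
  hence "e i \<in> span (e ` I - {e i})"
    using assms einj by (metis (no_types, lifting) image_eqI inj_on_contraD insertE insert_Diff span_base span_scale)
  thus False using eind assms(1) by (auto simp: dependent_def)
qed

lemma prd_zero: "length xs = n \<Longrightarrow> r < n \<Longrightarrow> xs ! r = 0 \<Longrightarrow> prd xs = 0"
  using lin_zero[OF lin[of xs r]] by (metis list_update_id)

lemma MS:
  assumes T: "subspace T" and len: "length xs = n" and sp: "\<forall>r<n. xs ! r \<in> span (A r)"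
    and gen: "\<And>ys. length ys = n \<Longrightarrow> \<forall>r<n. ys ! r \<in> A r \<Longrightarrow> prd ys \<in> T"
  shows "prd xs \<in> T"
proof -
  have "\<forall>xs. length xs = n \<longrightarrow> (\<forall>r<n. r < m \<longrightarrow> xs ! r \<in> span (A r)) \<longrightarrow> (\<forall>r<n. m \<le> r \<longrightarrow> xs ! r \<in> A r) \<longrightarrow> prd xs \<in> T"
    if "m \<le> n" for m
    using that
  proof (induction m)
    case 0
    then show ?case using gen by auto
  next
    case (Suc m)
    show ?case
    proof (intro allI impI)
      fix xs :: "'v list"
      assume l: "length xs = n" and h1: "\<forall>r<n. r < Suc m \<longrightarrow> xs ! r \<in> span (A r)"
        and h2: "\<forall>r<n. Suc m \<le> r \<longrightarrow> xs ! r \<in> A r"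
      have mn: "m < n" using Suc by simp
      let ?f = "\<lambda>x. prd (xs[m := x])"
      have L: "Vector_Spaces.linear scale scale ?f" using lin l mn by blast
      have "A m \<subseteq> {x. ?f x \<in> T}"
      proof
        fix a assume a: "a \<in> A m"
        have "\<forall>r<n. m \<le> r \<longrightarrow> xs[m := a] ! r \<in> A r"
          using h2 a l by (auto simp: nth_list_update)
        moreover have "\<forall>r<n. r < m \<longrightarrow> xs[m := a] ! r \<in> span (A r)"
          using h1 l by (auto simp: nth_list_update)
        ultimately have "prd (xs[m := a]) \<in> T"
          using Suc.IH[rule_format, of "xs[m := a]"] Suc.prems l by auto
        then show "a \<in> {x. ?f x \<in> T}" by simp
      qed
      moreover have "subspace {x. ?f x \<in> T}"
        unfolding subspace_def
        using lin_zero[OF L] lin_add[OF L] lin_scale[OF L] T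
        by (auto simp: subspace_0 subspace_add subspace_scale)
      ultimately have "span (A m) \<subseteq> {x. ?f x \<in> T}" by (rule span_minimal)
      moreover have "xs ! m \<in> span (A m)" using h1 mn by simp
      ultimately have "?f (xs ! m) \<in> T" by blast
      then show "prd xs \<in> T" by simp
    qed
  qed
  from this[OF order.refl] len sp show ?thesis by auto
qed

definition dec :: "'v \<Rightarrow> 'g \<Rightarrow> 'v" where
  "dec x = (THE c. hom_decomp Lg x c)"

lemma hd_ex1: "\<exists>!c. hom_decomp Lg x c"
  using gvs unfolding graded_vs_def hom_decomp_def by blast

lemma dec_ok: "hom_decomp Lg x (dec x)"
  unfolding dec_def using theI'[OF hd_ex1] .

lemma dec_eq: "hom_decomp Lg x c \<Longrightarrow> dec x = c"
  unfolding dec_def using the1_equality[OF hd_ex1] by blast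

lemma dec_in: "dec x g \<in> Lg g"
  using dec_ok by (simp add: hom_decomp_def)

lemma dec_fin: "finite {g. dec x g \<noteq> 0}"
  using dec_ok by (simp add: hom_decomp_def)

lemma dec_sum: "x = sum (dec x) {g. dec x g \<noteq> 0}"
  using dec_ok by (simp add: hom_decomp_def)

lemma hd_intro:
  assumes "\<And>g. c g \<in> Lg g" "finite F" "{g. c g \<noteq> 0} \<subseteq> F" "x = sum c F"
  shows "hom_decomp Lg x c"
proof -
  have "finite {g. c g \<noteq> 0}" using assms(2,3) finite_subset by blast
  moreover have "sum c F = sum c {g. c g \<noteq> 0}"
    using assms(2,3) by (intro sum.mono_neutral_right) auto
  ultimately show ?thesis using assms by (simp add: hom_decomp_def)
qed

lemma dec_add: "dec (x + y) = (\<lambda>g. dec x g + dec y g)"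
proof (rule dec_eq, rule hd_intro)
  show "dec x g + dec y g \<in> Lg g" for g using dec_in Lsub subspace_add by blast
  show "finite ({g. dec x g \<noteq> 0} \<union> {g. dec y g \<noteq> 0})" using dec_fin by simp
  show "{g. dec x g + dec y g \<noteq> 0} \<subseteq> {g. dec x g \<noteq> 0} \<union> {g. dec y g \<noteq> 0}" by auto
  have "x = sum (dec x) ({g. dec x g \<noteq> 0} \<union> {g. dec y g \<noteq> 0})"
  proof -
    have "sum (dec x) {g. dec x g \<noteq> 0} = sum (dec x) ({g. dec x g \<noteq> 0} \<union> {g. dec y g \<noteq> 0})"
      by (rule sum.mono_neutral_left) (use dec_fin[of x] dec_fin[of y] in auto)
    then show ?thesis using dec_sum[of x] by simp
  qed
  moreover have "y = sum (dec y) ({g. dec x g \<noteq> 0} \<union> {g. dec y g \<noteq> 0})"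
  proof -
    have "sum (dec y) {g. dec y g \<noteq> 0} = sum (dec y) ({g. dec x g \<noteq> 0} \<union> {g. dec y g \<noteq> 0})"
      by (rule sum.mono_neutral_left) (use dec_fin[of x] dec_fin[of y] in auto)
    then show ?thesis using dec_sum[of y] by simp
  qed
  ultimately show "x + y = (\<Sum>g\<in>{g. dec x g \<noteq> 0} \<union> {g. dec y g \<noteq> 0}. dec x g + dec y g)"
    by (simp add: sum.distrib)
qed

lemma dec_scale: "dec (scale a x) = (\<lambda>g. scale a (dec x g))"
proof (rule dec_eq, rule hd_intro)
  show "scale a (dec x g) \<in> Lg g" for g using dec_in Lsub subspace_scale by blast
  show "finite {g. dec x g \<noteq> 0}" using dec_fin by simp
  show "{g. scale a (dec x g) \<noteq> 0} \<subseteq> {g. dec x g \<noteq> 0}" by auto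
  show "scale a x = (\<Sum>g\<in>{g. dec x g \<noteq> 0}. scale a (dec x g))"
    using dec_sum[of x] by (metis scale_sum_right)
qed

lemma dec_hom: "x \<in> Lg g0 \<Longrightarrow> dec x = (\<lambda>g. if g = g0 then x else 0)"
proof (rule dec_eq, rule hd_intro)
  assume x: "x \<in> Lg g0"
  show "(if g = g0 then x else 0) \<in> Lg g" for g using x Lsub subspace_0 by auto
  show "finite {g0}" by simp
  show "{g. (if g = g0 then x else 0) \<noteq> 0} \<subseteq> {g0}" by auto
  show "x = (\<Sum>g\<in>{g0}. if g = g0 then x else 0)" by simp
qed

lemma graded_iff: "graded_subspace scale Lg S \<longleftrightarrow> subspace S \<and> (\<forall>x\<in>S. \<forall>g. dec x g \<in> S)"
  unfolding graded_subspace_def using dec_ok dec_eq by metis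

lemma span_graded:
  assumes B: "\<And>b. b \<in> B \<Longrightarrow> \<exists>g. b \<in> Lg g"
  shows "graded_subspace scale Lg (span B)"
proof -
  let ?T = "{x. \<forall>g. dec x g \<in> span B}"
  have "B \<subseteq> ?T"
  proof
    fix b assume b: "b \<in> B"
    then obtain g0 where "b \<in> Lg g0" using B by blast
    then show "b \<in> ?T" using b by (simp add: dec_hom span_base span_zero)
  qed
  moreover have "subspace ?T"
    unfolding subspace_def
  proof (intro conjI ballI allI)
    show "0 \<in> ?T" using dec_hom[of 0 0] Lsub subspace_0 by (simp add: span_zero)
    show "x + y \<in> ?T" if "x \<in> ?T" "y \<in> ?T" for x y using that by (simp add: dec_add span_add)
    show "scale c x \<in> ?T" if "x \<in> ?T" for c x using that by (simp add: dec_scale span_scale)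
  qed
  ultimately have "span B \<subseteq> ?T" by (rule span_minimal)
  then show ?thesis unfolding graded_iff by auto
qed

lemma inter_graded: "graded_subspace scale Lg A \<Longrightarrow> graded_subspace scale Lg B \<Longrightarrow> graded_subspace scale Lg (A \<inter> B)"
  unfolding graded_iff by (auto intro: subspace_inter)

lemma subspace_setsum2: "subspace A \<Longrightarrow> subspace B \<Longrightarrow> subspace (setsum2 A B)"
  unfolding setsum2_def by (rule subspace_sums)

lemma setsum2_graded: "graded_subspace scale Lg A \<Longrightarrow> graded_subspace scale Lg B \<Longrightarrow> graded_subspace scale Lg (setsum2 A B)"
proof -
  assume a: "graded_subspace scale Lg A" and b: "graded_subspace scale Lg B"
  have "subspace (setsum2 A B)" using a b subspace_setsum2 by (simp add: graded_iff)
  moreover have "dec x g \<in> setsum2 A B" if xin: "x \<in> setsum2 A B" for x g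
  proof -
    obtain p q where "x = p + q" "p \<in> A" "q \<in> B" using xin by (auto simp: setsum2_def)
    moreover then have "dec p g \<in> A" "dec q g \<in> B" using a b unfolding graded_iff by blast+
    ultimately show ?thesis unfolding setsum2_def by (auto simp: dec_add)
  qed
  ultimately show ?thesis by (simp add: graded_iff)
qed

definition Hh :: "'v set" where
  "Hh = (V \<inter> (\<Union>g. Lg g)) \<union> e ` I"

lemma Hh_hom: "z \<in> Hh \<Longrightarrow> \<exists>g. z \<in> Lg g"
  using ehom by (auto simp: Hh_def homogeneous_def)

lemma Hh_VE: "Hh \<subseteq> V \<union> e ` I"
  by (auto simp: Hh_def)

lemma V_span_Vh: "V \<subseteq> span (V \<inter> (\<Union>g. Lg g))"
proof
  fix x assume x: "x \<in> V"
  have "dec x g \<in> V \<inter> (\<Union>g. Lg g)" for g using x Vgs dec_in unfolding graded_iff by blast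
  hence "sum (dec x) {g. dec x g \<noteq> 0} \<in> span (V \<inter> (\<Union>g. Lg g))"
    by (intro span_sum span_base) auto
  then show "x \<in> span (V \<inter> (\<Union>g. Lg g))" using dec_sum[of x] by simp
qed

lemma span_Hh: "span Hh = UNIV"
proof -
  have "x \<in> span Hh" for x
  proof -
    have "x \<in> setsum2 V W" using VW by simp
    then obtain v w where vw: "x = v + w" "v \<in> V" "w \<in> W" unfolding setsum2_def by blast
    have "v \<in> span Hh" using vw(2) V_span_Vh span_mono[of "V \<inter> (\<Union>g. Lg g)" Hh] by (auto simp: Hh_def)
    moreover have "w \<in> span Hh" using vw(3) Wspan span_mono[of "e ` I" Hh] by (auto simp: Hh_def)
    ultimately show ?thesis using vw(1) span_add by simp
  qed
  then show ?thesis by auto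
qed

lemma span_VE: "span (V \<union> e ` I) = UNIV"
  using span_Hh span_mono[OF Hh_VE] by auto

lemma perm_lt: "\<tau> permutes {..<m} \<Longrightarrow> t < m \<Longrightarrow> \<tau> t < m"
  using permutes_in_image[of \<tau> "{..<m}" t] by simp

lemma PS_perm:
  assumes len: "length As = n" and tau: "\<tau> permutes {..<n}" and sig: "\<sigma> permutes {..<n}"
  shows "prod_sets scale n prd \<sigma> (permute_list \<tau> As) = prod_sets scale n prd (\<tau> \<circ> \<sigma>) As"
proof -
  have "{prod_perm n prd \<sigma> xs | xs. length xs = n \<and> (\<forall>r<n. xs ! r \<in> permute_list \<tau> As ! r)}
      = {prod_perm n prd (\<tau> \<circ> \<sigma>) xs | xs. length xs = n \<and> (\<forall>r<n. xs ! r \<in> As ! r)}"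
    (is "?L = ?R")
  proof
    show "?L \<subseteq> ?R"
    proof
      fix x assume "x \<in> ?L"
      then obtain xs where xs: "x = prod_perm n prd \<sigma> xs" "length xs = n" "\<forall>r<n. xs ! r \<in> permute_list \<tau> As ! r"
        by blast
      let ?ys = "permute_list (inv \<tau>) xs"
      have ip: "inv \<tau> permutes {..<n}" using tau by (rule permutes_inv)
      have "length ?ys = n" using xs by simp
      moreover have "\<forall>q<n. ?ys ! q \<in> As ! q"
      proof (intro allI impI)
        fix q assume q: "q < n"
        have "?ys ! q = xs ! inv \<tau> q" using q xs(2) ip by (simp add: permute_list_nth)
        also have "\<dots> \<in> permute_list \<tau> As ! (inv \<tau> q)" using xs(3) perm_lt[OF ip q] by blast
        also have "\<dots> = As ! (\<tau> (inv \<tau> q))" using len tau perm_lt[OF ip q] by (simp add: permute_list_nth)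
        also have "\<dots> = As ! q" using permutes_inverses(1)[OF tau] by simp
        finally show "?ys ! q \<in> As ! q" .
      qed
      moreover have "prod_perm n prd (\<tau> \<circ> \<sigma>) ?ys = x"
      proof -
        have M: "map (\<lambda>t. ?ys ! (\<tau> \<circ> \<sigma>) t) [0..<n] = map (\<lambda>t. xs ! \<sigma> t) [0..<n]"
        proof (rule map_cong[OF refl])
          fix t assume "t \<in> set [0..<n]"
          then have t: "t < n" by simp
          have "\<tau> (\<sigma> t) < n" using perm_lt[OF tau perm_lt[OF sig t]] .
          then have "?ys ! (\<tau> (\<sigma> t)) = xs ! (inv \<tau> (\<tau> (\<sigma> t)))" using xs(2) ip by (simp add: permute_list_nth)
          then show "?ys ! (\<tau> \<circ> \<sigma>) t = xs ! \<sigma> t" using permutes_inverses(2)[OF tau] by simp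
        qed
        show ?thesis unfolding prod_perm_def by (simp only: M xs(1) prod_perm_def)
      qed
      ultimately show "x \<in> ?R" by blast
    qed
  next
    show "?R \<subseteq> ?L"
    proof
      fix x assume "x \<in> ?R"
      then obtain xs where xs: "x = prod_perm n prd (\<tau> \<circ> \<sigma>) xs" "length xs = n" "\<forall>r<n. xs ! r \<in> As ! r"
        by blast
      let ?ys = "permute_list \<tau> xs"
      have "length ?ys = n" using xs by simp
      moreover have "\<forall>q<n. ?ys ! q \<in> permute_list \<tau> As ! q"
        using xs(2,3) len tau perm_lt[OF tau] by (simp add: permute_list_nth)
      moreover have "prod_perm n prd \<sigma> ?ys = x"
      proof -
        have M: "map (\<lambda>t. ?ys ! \<sigma> t) [0..<n] = map (\<lambda>t. xs ! (\<tau> \<circ> \<sigma>) t) [0..<n]"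
        proof (rule map_cong[OF refl])
          fix t assume "t \<in> set [0..<n]"
          then have t: "t < n" by simp
          then show "?ys ! \<sigma> t = xs ! (\<tau> \<circ> \<sigma>) t" using xs(2) tau perm_lt[OF sig t] by (simp add: permute_list_nth)
        qed
        show ?thesis unfolding prod_perm_def by (simp only: M xs(1) prod_perm_def)
      qed
      ultimately show "x \<in> ?L" by blast
    qed
  qed
  then show ?thesis by (simp add: prod_sets_def)
qed

abbreviation "uu \<equiv> u_set V e"
abbreviation "PP \<sigma> js \<equiv> prod_sets scale n prd \<sigma> (map uu js)"
abbreviation "am \<equiv> a_map scale n prd V I e"

lemma am_P: "PP \<sigma> js = PP \<sigma>' js' \<Longrightarrow> am \<sigma> js = am \<sigma>' js'"
  unfolding a_map_def by simp

lemma AP: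
  assumes "length js = n" "\<tau> permutes {..<n}" "\<sigma> permutes {..<n}"
  shows "am \<sigma> (permute_list \<tau> js) = am (\<tau> \<circ> \<sigma>) js"
proof (rule am_P)
  have "map uu (permute_list \<tau> js) = permute_list \<tau> (map uu js)"
    using assms by (simp add: permute_list_map)
  then show "PP \<sigma> (permute_list \<tau> js) = PP (\<tau> \<circ> \<sigma>) js"
    using PS_perm[of "map uu js" \<tau> \<sigma>] assms by simp
qed

lemma AP':
  assumes "length js = n" "\<tau> permutes {..<n}" "\<sigma> permutes {..<n}"
  shows "am \<sigma> js = am (inv \<tau> \<circ> \<sigma>) (permute_list \<tau> js)"
proof -
  have ip: "inv \<tau> \<circ> \<sigma> permutes {..<n}" using assms by (simp add: permutes_compose permutes_inv)
  have "am (inv \<tau> \<circ> \<sigma>) (permute_list \<tau> js) = am (\<tau> \<circ> (inv \<tau> \<circ> \<sigma>)) js"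
    using AP[OF assms(1,2) ip] .
  also have "\<tau> \<circ> (inv \<tau> \<circ> \<sigma>) = \<sigma>" using permutes_inv_o(1)[OF assms(2)] by (simp add: o_assoc)
  finally show ?thesis by (rule sym)
qed

lemma PP_sub: "subspace (PP \<sigma> js)"
  by (simp add: prod_sets_def)

lemma PP_nz: "PP \<sigma> js \<noteq> {0} \<Longrightarrow> \<exists>x\<in>PP \<sigma> js. x \<noteq> 0"
  using PP_sub[of \<sigma> js] subspace_0 by blast

lemma am_V: "PP \<sigma> js \<noteq> {0} \<Longrightarrow> PP \<sigma> js \<subseteq> V \<Longrightarrow> am \<sigma> js = {None}"
proof -
  assume nz: "PP \<sigma> js \<noteq> {0}" and sv: "PP \<sigma> js \<subseteq> V"
  obtain x where x: "x \<in> PP \<sigma> js" "x \<noteq> 0" using PP_nz[OF nz] by blast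
  have "\<not> (PP \<sigma> js \<subseteq> line scale (e r))" if "r \<in> I" for r
    using line_V[OF that] x sv by blast
  then show ?thesis using nz sv unfolding a_map_def by auto
qed

lemma am_line: "j \<in> I \<Longrightarrow> PP \<sigma> js \<noteq> {0} \<Longrightarrow> PP \<sigma> js \<subseteq> line scale (e j) \<Longrightarrow> am \<sigma> js = {Some j}"
proof -
  assume j: "j \<in> I" and nz: "PP \<sigma> js \<noteq> {0}" and sl: "PP \<sigma> js \<subseteq> line scale (e j)"
  obtain x where x: "x \<in> PP \<sigma> js" "x \<noteq> 0" using PP_nz[OF nz] by blast
  have nv: "\<not> PP \<sigma> js \<subseteq> V" using line_V[OF j] x sl by blast
  have "\<not> (PP \<sigma> js \<subseteq> line scale (e r))" if "r \<in> I" "r \<noteq> j" for r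
    using line_line[OF that(1) j that(2)] x sl by blast
  then show ?thesis using nz sl nv j unfolding a_map_def by auto
qed

lemma am_sub: "am \<sigma> js \<subseteq> Iv I"
  unfolding a_map_def Iv_def Let_def by auto

lemma am_Some: "Some j \<in> am \<sigma> js \<Longrightarrow> j \<in> I \<and> PP \<sigma> js \<noteq> {0} \<and> PP \<sigma> js \<subseteq> line scale (e j)"
  unfolding a_map_def Let_def by (auto split: if_splits)

lemma am_None: "None \<in> am \<sigma> js \<Longrightarrow> PP \<sigma> js \<noteq> {0} \<and> PP \<sigma> js \<subseteq> V"
  unfolding a_map_def Let_def by (auto split: if_splits)

lemma CL_some:
  assumes len: "length js = n" and sj: "set js \<subseteq> Iv I" and nN: "None \<notin> set js" and sig: "\<sigma> permutes {..<n}"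
  shows "PP \<sigma> js \<subseteq> V \<or> (\<exists>j\<in>I. PP \<sigma> js \<subseteq> line scale (e j))"
proof -
  define ks where "ks = map the js"
  have js: "js = map Some ks" unfolding ks_def
    by (rule nth_equalityI) (use nN in \<open>auto, metis nth_mem option.collapse\<close>)
  have lks: "length ks = n" using len by (simp add: ks_def)
  have sks: "set ks \<subseteq> I" using sj js by (auto simp: Iv_def)
  have "{prod_perm n prd \<sigma> xs | xs. length xs = n \<and> (\<forall>r<n. xs ! r \<in> map uu js ! r)} = {prod_perm n prd \<sigma> (map e ks)}"
  proof -
    have "xs = map e ks" if "length xs = n" "\<forall>r<n. xs ! r \<in> map uu js ! r" for xs
      by (rule nth_equalityI) (use that lks js in \<open>auto simp: u_set_def\<close>)
    moreover have "\<forall>r<n. map e ks ! r \<in> map uu js ! r" using lks js by (simp add: u_set_def)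
    ultimately show ?thesis using lks by auto
  qed
  then have P: "PP \<sigma> js = span {prod_perm n prd \<sigma> (map e ks)}" by (simp add: prod_sets_def)
  define ks' where "ks' = map (\<lambda>t. ks ! \<sigma> t) [0..<n]"
  have pe: "prod_perm n prd \<sigma> (map e ks) = prd (map e ks')"
    unfolding prod_perm_def ks'_def map_map by (intro arg_cong[where f=prd] map_cong) (auto simp: lks perm_lt[OF sig])
  have "length ks' = n" by (simp add: ks'_def)
  moreover have "set ks' \<subseteq> I" using sks lks perm_lt[OF sig] by (auto simp: ks'_def)
  ultimately have "(\<exists>j\<in>I. prd (map e ks') \<in> line scale (e j)) \<or> prd (map e ks') \<in> V" by (rule q1)
  then show ?thesis
  proof
    assume "\<exists>j\<in>I. prd (map e ks') \<in> line scale (e j)"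
    then obtain j where j: "j \<in> I" "prd (map e ks') \<in> span {e j}" by (auto simp: line_span)
    have "span {prd (map e ks')} \<subseteq> span {e j}" by (rule span_minimal) (use j in auto)
    then show ?thesis unfolding P pe line_span using j by blast
  next
    assume "prd (map e ks') \<in> V"
    then have "span {prd (map e ks')} \<subseteq> V" using Vsub by (intro span_minimal) auto
    then show ?thesis unfolding P pe by blast
  qed
qed

lemma mset_filter_split: "mset (filter P xs @ filter (\<lambda>x. \<not> P x) xs) = mset xs"
  by (induction xs) auto

lemma permute_replicate: "\<tau> permutes {..<m} \<Longrightarrow> permute_list \<tau> (replicate m x) = replicate m x"
  by (rule nth_equalityI) (auto simp: permute_list_nth perm_lt)

lemma CL_mixed:
  assumes len: "length js = n" and sj: "set js \<subseteq> Iv I" and hN: "None \<in> set js"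
    and hS: "\<exists>x\<in>set js. x \<noteq> None" and sig: "\<sigma> permutes {..<n}"
  shows "\<exists>j\<in>I. PP \<sigma> js \<subseteq> line scale (e j)"
proof -
  define F where "F = filter (\<lambda>x. x \<noteq> None) js"
  define N where "N = filter (\<lambda>x. \<not> x \<noteq> None) js"
  have ms: "mset js = mset (F @ N)" unfolding F_def N_def by (simp only: mset_filter_split)
  obtain \<tau> where tau: "\<tau> permutes {..<length (F @ N)}" "permute_list \<tau> (F @ N) = js"
    using mset_eq_permutation[OF ms] by blast
  have lFN: "length (F @ N) = n" using mset_eq_length[OF ms] len by simp
  have tau': "\<tau> permutes {..<n}" using tau(1) lFN by simp
  define ks where "ks = map the F"
  define k where "k = length F"
  have lks: "length ks = k" by (simp add: ks_def k_def)
  have k0: "0 < k" using hS unfolding k_def F_def by (auto simp: filter_empty_conv length_greater_0_conv)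
  have lN: "0 < length N" using hN unfolding N_def by (auto simp: filter_empty_conv length_greater_0_conv)
  have "length F + length N = n" using lFN by simp
  then have kn: "k < n" using lN unfolding k_def by linarith
  have sks: "set ks \<subseteq> I" using sj by (auto simp: ks_def F_def Iv_def)
  have mF: "map uu F = map (\<lambda>i. {e i}) ks"
    unfolding ks_def F_def by (auto simp: u_set_def split: option.splits)
  have Nr: "N = replicate (length N) None" unfolding N_def by (simp add: replicate_length_same)
  have mN: "map uu N = replicate (n - k) V"
    using lFN Nr by (metis k_def add_diff_cancel_left' length_append map_replicate u_set_def option.case(1))
  have "map uu js = permute_list \<tau> (map uu (F @ N))"
    using permute_list_map[OF tau(1), of uu] tau(2) by simp
  then have "PP \<sigma> js = prod_sets scale n prd (\<tau> \<circ> \<sigma>) (map uu (F @ N))"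
    using PS_perm[of "map uu (F @ N)" \<tau> \<sigma>] lFN tau' sig by simp
  also have "map uu (F @ N) = map (\<lambda>i. {e i}) ks @ replicate (n - k) V" using mF mN by simp
  finally show ?thesis
    using q2[OF k0 kn lks sks permutes_compose[OF sig tau']] by (simp add: comp_def)
qed

lemma CL_none:
  assumes len: "length js = n" and aN: "set js \<subseteq> {None}" and sig: "\<sigma> permutes {..<n}"
  shows "PP \<sigma> js \<subseteq> V \<or> (\<exists>j\<in>I. PP \<sigma> js \<subseteq> line scale (e j))"
proof -
  have js: "js = replicate n None" using len aN by (metis replicate_length_same singletonD subsetD)
  have "map uu js = replicate n V" by (simp add: js u_set_def)
  also have "\<dots> = permute_list (inv \<sigma>) (replicate n V)" by (rule sym, rule permute_replicate[OF permutes_inv[OF sig]])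
  finally have "PP \<sigma> js = prod_sets scale n prd (inv \<sigma> \<circ> \<sigma>) (replicate n V)"
    using PS_perm[of "replicate n V" "inv \<sigma>" \<sigma>] sig permutes_inv[OF sig] by simp
  moreover have "inv \<sigma> \<circ> \<sigma> = id" using permutes_inv_o(2)[OF sig] .
  ultimately have "PP \<sigma> js = prod_sets scale n prd id (replicate n V)" by (simp only:)
  then show ?thesis using q3 by blast
qed

lemma CL:
  assumes len: "length js = n" and sj: "set js \<subseteq> Iv I" and sig: "\<sigma> permutes {..<n}"
    and nz: "PP \<sigma> js \<noteq> {0}"
  shows "\<exists>t. am \<sigma> js = {t}"
proof -
  have "PP \<sigma> js \<subseteq> V \<or> (\<exists>j\<in>I. PP \<sigma> js \<subseteq> line scale (e j))"
  proof (cases "None \<in> set js")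
    case True
    show ?thesis
    proof (cases "\<exists>x\<in>set js. x \<noteq> None")
      case True
      then show ?thesis using CL_mixed[OF len sj \<open>None \<in> set js\<close> True sig] by blast
    next
      case False
      then have "set js \<subseteq> {None}" by auto
      then show ?thesis using CL_none[OF len _ sig] by blast
    qed
  next
    case False
    then show ?thesis using CL_some[OF len sj False sig] by blast
  qed
  then show ?thesis using am_V[OF nz] am_line[OF _ nz] by blast
qed


end

context QM begin
abbreviation "mu \<equiv> mu_map scale n prd V I e"
abbreviation "phi \<equiv> phi_map scale n prd V I e"
abbreviation "conn \<equiv> connected_idx scale n prd V I e"
abbreviation "cls \<equiv> conn_class scale n prd V I e"

definition step :: "'i \<Rightarrow> 'i \<Rightarrow> bool" where
  "step a b \<longleftrightarrow> a \<in> I \<and> b \<in> I \<and> (\<exists>bt X. admissible_X n I X \<and> Some b \<in> mu (bt, Some a) X)"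

definition SR :: "('i \<times> 'i) set" where "SR = {(x, y). step x y}"

lemma bm_sub: "b_map scale n prd V I e \<sigma> j js \<subseteq> Iv I"
  unfolding b_map_def by auto

lemma mu_sub: "mu J X \<subseteq> Iv I"
  unfolding mu_map_def apply (auto split: prod.splits bool.splits)
  using am_sub bm_sub by blast+

lemma phi_bar: "(False, k) \<in> phi J X \<Longrightarrow> (True, k) \<in> phi J X"
  unfolding phi_map_def Let_def by (auto split: if_splits)

lemma phi_intro: "j \<in> J \<Longrightarrow> Some b \<in> mu j X \<Longrightarrow> (False, Some b) \<in> phi J X"
  unfolding phi_map_def Let_def by auto

definition chain :: "'i \<Rightarrow> 'i \<Rightarrow> (bool \<times> 'i option list) list \<Rightarrow> bool \<times> 'i option \<Rightarrow> bool" where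
  "chain a b Xs it \<longleftrightarrow> Xs \<noteq> [] \<and> (\<forall>X\<in>set Xs. admissible_X n I X) \<and>
         it \<in> {(False, Some a), (True, Some a)} \<and>
         (\<forall>m. 0 < m \<longrightarrow> m < length Xs \<longrightarrow> foldl phi {it} (take m Xs) \<noteq> {}) \<and>
         (False, Some b) \<in> foldl phi {it} Xs"

lemma conn_alt: "conn a b \<longleftrightarrow> a \<in> I \<and> b \<in> I \<and> (a = b \<or> (\<exists>Xs it. chain a b Xs it))"
  unfolding connected_idx_def chain_def by (rule refl)

lemma conn_step:
  assumes c: "conn a b" and s: "step b c"
  shows "conn a c"
proof -
  obtain bt X where X: "admissible_X n I X" "Some c \<in> mu (bt, Some b) X" using s unfolding step_def by blast
  have aI: "a \<in> I" using c unfolding conn_alt by blast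
  have cI: "c \<in> I" using s unfolding step_def by blast
  show ?thesis
  proof (cases "a = b")
    case True
    have "(False, Some c) \<in> foldl phi {(bt, Some a)} [X]" using phi_intro[of "(bt, Some a)" "{(bt, Some a)}" c X] X True by simp
    moreover have "(bt, Some a) \<in> {(False, Some a), (True, Some a)}" by (cases bt) auto
    moreover have "\<forall>m. 0 < m \<longrightarrow> m < length [X] \<longrightarrow> foldl phi {(bt, Some a)} (take m [X]) \<noteq> {}" by simp
    ultimately have "chain a c [X] (bt, Some a)" unfolding chain_def using X(1) by simp
    then show ?thesis unfolding conn_alt using aI cI by blast
  next
    case False
    then obtain Xs it where ch0: "chain a b Xs it" using c unfolding conn_alt by blast
    have ch: "Xs \<noteq> []" "\<forall>X\<in>set Xs. admissible_X n I X" "it \<in> {(False, Some a), (True, Some a)}"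
      "\<forall>m. 0 < m \<longrightarrow> m < length Xs \<longrightarrow> foldl phi {it} (take m Xs) \<noteq> {}"
      "(False, Some b) \<in> foldl phi {it} Xs"
      using ch0 unfolding chain_def by blast+
    obtain ys X' where Xs: "Xs = ys @ [X']" using ch(1) by (metis rev_exhaust)
    have "(False, Some b) \<in> phi (foldl phi {it} ys) X'" using ch(5) unfolding Xs by simp
    then have "(True, Some b) \<in> phi (foldl phi {it} ys) X'" by (rule phi_bar)
    then have "(True, Some b) \<in> foldl phi {it} Xs" unfolding Xs by simp
    then have bt: "(bt, Some b) \<in> foldl phi {it} Xs" using ch(5) by (cases bt) auto
    have new: "(False, Some c) \<in> foldl phi {it} (Xs @ [X])" using phi_intro[OF bt X(2)] by simp
    have pre: "\<forall>m. 0 < m \<longrightarrow> m < length (Xs @ [X]) \<longrightarrow> foldl phi {it} (take m (Xs @ [X])) \<noteq> {}"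
    proof (intro allI impI)
      fix m assume m: "0 < m" "m < length (Xs @ [X])"
      show "foldl phi {it} (take m (Xs @ [X])) \<noteq> {}"
      proof (cases "m < length Xs")
        case True then show ?thesis using ch(4) m by simp
      next
        case False then have "m = length Xs" using m by simp
        then have "take m (Xs @ [X]) = Xs" by simp
        then show ?thesis using ch(5) by auto
      qed
    qed
    have "\<forall>X\<in>set (Xs @ [X]). admissible_X n I X" using ch(2) X(1) by simp
    then have "chain a c (Xs @ [X]) it" unfolding chain_def using ch(3) new pre by simp
    then show ?thesis unfolding conn_alt using aI cI by blast
  qed
qed

lemma rtr_conn: "(a, b) \<in> SR\<^sup>* \<Longrightarrow> a \<in> I \<Longrightarrow> conn a b"
proof (induction rule: rtrancl_induct)
  case base
  then show ?case unfolding conn_alt by simp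
next
  case (step y z)
  have "step y z" using step.hyps(2) by (simp add: SR_def)
  then show ?case by (rule conn_step[OF step.IH[OF step.prems]])
qed

lemma conn_rtr:
  assumes c: "conn a b" shows "(a, b) \<in> SR\<^sup>*"
proof (cases "a = b")
  case True then show ?thesis by simp
next
  case False
  then obtain Xs it where ch0: "chain a b Xs it" using c unfolding conn_alt by blast
  have ch: "\<forall>X\<in>set Xs. admissible_X n I X" "it \<in> {(False, Some a), (True, Some a)}"
    "(False, Some b) \<in> foldl phi {it} Xs"
    using ch0 unfolding chain_def by blast+
  have aI: "a \<in> I" using c unfolding conn_alt by blast
  have "\<forall>p \<in> foldl phi {it} Xs. \<exists>c. snd p = Some c \<and> c \<in> I \<and> (a, c) \<in> SR\<^sup>*"
    using ch(1)
  proof (induction Xs rule: rev_induct)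
    case Nil then show ?case using ch(2) aI by auto
  next
    case (snoc X ys)
    have IH: "\<forall>p \<in> foldl phi {it} ys. \<exists>c. snd p = Some c \<and> c \<in> I \<and> (a, c) \<in> SR\<^sup>*"
      using snoc by simp
    have adm: "admissible_X n I X" using snoc.prems by simp
    show ?case
    proof
      fix p assume "p \<in> foldl phi {it} (ys @ [X])"
      then have p: "p \<in> phi (foldl phi {it} ys) X" by simp
      have "\<exists>j\<in>foldl phi {it} ys. \<exists>k\<in>mu j X. k \<noteq> None \<and> snd p = k"
        using p unfolding phi_map_def Let_def by (auto split: if_splits)
      then obtain j k where jk: "j \<in> foldl phi {it} ys" "k \<in> mu j X" "k \<noteq> None" "snd p = k"
        by blast
      obtain c where c: "snd j = Some c" "c \<in> I" "(a, c) \<in> SR\<^sup>*" using IH jk(1) by blast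
      obtain d where d: "k = Some d" using jk(3) by auto
      have "Some d \<in> Iv I" using mu_sub[of j X] jk(2) d by blast
      then have dI: "d \<in> I" by (auto simp: Iv_def)
      have "step c d" unfolding step_def using c dI adm jk(2) d
        by (intro conjI exI[of _ "fst j"] exI[of _ X]) (auto, metis prod.collapse)
      then have "(a, d) \<in> SR\<^sup>*" using c(3) by (simp add: SR_def rtrancl.rtrancl_into_rtrancl)
      then show "\<exists>c. snd p = Some c \<and> c \<in> I \<and> (a, c) \<in> SR\<^sup>*" using jk(4) d dI by auto
    qed
  qed
  then show ?thesis using ch(3) by fastforce
qed

lemma list2: "length xs \<ge> 2 \<Longrightarrow> xs = xs ! 0 # xs ! 1 # drop 2 xs"
  by (cases xs; cases "tl xs") auto

lemma perm_swap01: "length L \<ge> 2 \<Longrightarrow> permute_list (Transposition.transpose 0 1) L = L ! 1 # L ! 0 # drop 2 L"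
  by (rule nth_equalityI) (auto simp: permute_list_def nth_Cons split: nat.splits)

lemma step_sym:
  assumes s: "step a b" shows "step b a"
proof -
  obtain bt X where X: "admissible_X n I X" "Some b \<in> mu (bt, Some a) X" and aI: "a \<in> I" and bI: "b \<in> I"
    using s by (auto simp: step_def)
  obtain bX js where Xe: "X = (bX, js)" by (cases X)
  have ljs: "length js = n - 1" and sjs: "set js \<subseteq> Iv I" using X(1) Xe by (auto simp: admissible_X_def)
  have aIv: "Some a \<in> Iv I" using aI by (simp add: Iv_def)
  have "\<exists>bt' X'. admissible_X n I X' \<and> Some a \<in> mu (bt', Some b) X'"
  proof (cases bt)
    case False
    show ?thesis
    proof (cases bX)
      case False
      then obtain \<sigma> where sg: "\<sigma> permutes {..<n}" "Some b \<in> am \<sigma> (Some a # js)"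
        using X(2) \<open>\<not> bt\<close> Xe unfolding mu_map_def by auto
      have "am \<sigma> (Some a # js) = {Some b}" using am_Some[OF sg(2)] am_line by blast
      then have "Some a \<in> mu (False, Some b) (True, js)"
        using sg(1) aIv unfolding mu_map_def b_map_def by auto
      moreover have "admissible_X n I (True, js)" using X(1) Xe by (simp add: admissible_X_def)
      ultimately show ?thesis by blast
    next
      case True
      then obtain \<sigma> where sg: "\<sigma> permutes {..<n}" "Some b \<in> b_map scale n prd V I e \<sigma> (Some a) js"
        using X(2) \<open>\<not> bt\<close> Xe unfolding mu_map_def by auto
      then have "am \<sigma> (Some b # js) = {Some a}" unfolding b_map_def by auto
      then have "Some a \<in> mu (False, Some b) (False, js)"
        using sg(1) unfolding mu_map_def by auto
      moreover have "admissible_X n I (False, js)" using X(1) Xe by (simp add: admissible_X_def)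
      ultimately show ?thesis by blast
    qed
  next
    case True
    then have bXf: "\<not> bX" using X(2) Xe unfolding mu_map_def by (cases bX) auto
    define rest where "rest k = take k js @ drop (Suc k) js" for k
    obtain k \<sigma> where ks: "k < n - 1" "\<sigma> permutes {..<n}"
      "Some b \<in> b_map scale n prd V I e \<sigma> (js ! k) (Some a # rest k)"
      using X(2) True bXf Xe unfolding mu_map_def rest_def by auto
    have am1: "am \<sigma> (Some b # Some a # rest k) = {js ! k}" using ks(3) unfolding b_map_def by auto
    have lr: "length (rest k) = n - 2" using ljs ks(1) by (auto simp: rest_def)
    define L where "L = Some b # Some a # rest k"
    have lL: "length L = n" using lr n2 by (simp add: L_def)
    have tp: "Transposition.transpose 0 1 permutes {..<n}" using n2 by (intro permutes_swap_id) auto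
    have pl: "permute_list (Transposition.transpose 0 1) L = Some a # Some b # rest k"
      using perm_swap01[of L] lL n2 by (simp add: L_def)
    have sg': "Transposition.transpose 0 1 \<circ> \<sigma> permutes {..<n}" using permutes_compose[OF ks(2) tp] .
    have "am (Transposition.transpose 0 1 \<circ> \<sigma>) (Some a # Some b # rest k)
        = am (Transposition.transpose 0 1 \<circ> (Transposition.transpose 0 1 \<circ> \<sigma>)) L"
      using AP[OF lL tp sg'] pl by simp
    also have "Transposition.transpose 0 1 \<circ> (Transposition.transpose 0 1 \<circ> \<sigma>) = \<sigma>"
      by (simp add: o_assoc)
    finally have "am (Transposition.transpose 0 1 \<circ> \<sigma>) (Some a # Some b # rest k) = {js ! k}"
      using am1 by (simp add: L_def comp_def)
    then have "Some a \<in> b_map scale n prd V I e (Transposition.transpose 0 1 \<circ> \<sigma>) (js ! k) (Some b # rest k)"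
      using aIv unfolding b_map_def by auto
    then have "Some a \<in> mu (True, Some b) (False, js)"
      using ks(1) sg' unfolding mu_map_def rest_def by simp blast
    moreover have "admissible_X n I (False, js)" using X(1) Xe by (simp add: admissible_X_def)
    ultimately show ?thesis by blast
  qed
  then show ?thesis using aI bI by (auto simp: step_def)
qed

lemma sym_SR: "sym (SR\<^sup>*)"
  by (rule sym_rtrancl) (auto simp: sym_def SR_def intro: step_sym)

lemma conn_iff: "conn a b \<longleftrightarrow> a \<in> I \<and> b \<in> I \<and> (a, b) \<in> SR\<^sup>*"
  using conn_rtr rtr_conn conn_alt by blast

lemma conn_sym: "conn a b \<Longrightarrow> conn b a"
  using sym_SR by (auto simp: conn_iff sym_def)

lemma conn_trans: "conn a b \<Longrightarrow> conn b c \<Longrightarrow> conn a c"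
  by (auto simp: conn_iff)

lemma cls_I: "cls i \<subseteq> I"
  unfolding conn_class_def conn_alt by blast

lemma cls_self: "i \<in> I \<Longrightarrow> i \<in> cls i"
  unfolding conn_class_def conn_alt by blast

lemma cls_step: "a \<in> cls i \<Longrightarrow> step a b \<Longrightarrow> b \<in> cls i"
  by (simp add: conn_class_def conn_step)

lemma cls_eq: "a \<in> cls i \<Longrightarrow> a \<in> cls h \<Longrightarrow> cls i = cls h"
  unfolding conn_class_def using conn_sym conn_trans by blast

lemma S1:
  assumes len: "length js = n" and sj: "set js \<subseteq> Iv I" and sig: "\<sigma> permutes {..<n}"
    and am: "am \<sigma> js = {Some j}" and r: "r < n" "js ! r = Some a"
  shows "step a j"
proof -
  define \<tau> where "\<tau> = Transposition.transpose 0 r"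
  have tp: "\<tau> permutes {..<n}" unfolding \<tau>_def using n2 r by (intro permutes_swap_id) auto
  define js' where "js' = permute_list \<tau> js"
  have l': "length js' = n" by (simp add: js'_def len)
  have h0: "js' ! 0 = Some a" unfolding js'_def using tp len r n2 by (simp add: permute_list_nth \<tau>_def)
  obtain rest1 where js'e: "js' = Some a # rest1" using h0 l' n2 by (cases js') auto
  have s': "set js' \<subseteq> Iv I" using sj tp len by (simp add: js'_def)
  have sg: "inv \<tau> \<circ> \<sigma> permutes {..<n}" using tp sig by (simp add: permutes_compose permutes_inv)
  have "am (inv \<tau> \<circ> \<sigma>) js' = {Some j}" using AP'[OF len tp sig] am by (simp add: js'_def)
  then have "Some j \<in> am (inv \<tau> \<circ> \<sigma>) (Some a # rest1)" using js'e by simp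
  then have "Some j \<in> mu (False, Some a) (False, rest1)"
    unfolding mu_map_def by (simp only: prod.case bool.case) (use sg in blast)
  moreover have "set rest1 \<subseteq> Iv I" "length rest1 = n - 1" using s' l' js'e by auto
  then have "admissible_X n I (False, rest1)" by (simp add: admissible_X_def)
  moreover have "Some a \<in> Iv I" using sj r len nth_mem by (metis subsetD)
  then have "a \<in> I" by (auto simp: Iv_def)
  moreover have "j \<in> I" using am_Some[of j \<sigma> js] am by simp
  ultimately show ?thesis unfolding step_def by blast
qed

lemma S2:
  assumes len: "length js = n" and sj: "set js \<subseteq> Iv I" and sig: "\<sigma> permutes {..<n}"
    and am: "am \<sigma> js = {t}" and r: "r < n" "r' < n" "r \<noteq> r'" "js ! r = Some a" "js ! r' = Some b"
  shows "step a b"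
proof -
  define r1 where "r1 = Transposition.transpose 0 r' r"
  have r10: "r1 \<noteq> 0" using r(3) by (auto simp: r1_def transpose_def)
  have r1n: "r1 < n" using r by (auto simp: r1_def transpose_def)
  define \<tau> where "\<tau> = Transposition.transpose 0 r' \<circ> Transposition.transpose 1 r1"
  have tp: "\<tau> permutes {..<n}" unfolding \<tau>_def using n2 r r1n
    by (intro permutes_compose permutes_swap_id) auto
  have t0: "\<tau> 0 = r'" using r10 by (simp add: \<tau>_def)
  have t1: "\<tau> 1 = r" by (simp add: \<tau>_def r1_def)
  define js' where "js' = permute_list \<tau> js"
  have l': "length js' = n" by (simp add: js'_def len)
  have h0: "js' ! 0 = Some b" unfolding js'_def using tp len r n2 t0 by (simp add: permute_list_nth)
  have h1: "js' ! 1 = Some a" unfolding js'_def using tp len r n2 t1 by (simp add: permute_list_nth)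
  define rest where "rest = drop 2 js'"
  have L2: "js' = js' ! 0 # js' ! 1 # drop 2 js'" by (rule list2) (use l' n2 in simp)
  have js'e: "js' = Some b # Some a # rest" unfolding rest_def using L2 unfolding h0 h1 .
  have s': "set js' \<subseteq> Iv I" using sj tp len by (simp add: js'_def)
  have sg: "inv \<tau> \<circ> \<sigma> permutes {..<n}" using tp sig by (simp add: permutes_compose permutes_inv)
  have am': "am (inv \<tau> \<circ> \<sigma>) (Some b # Some a # rest) = {t}" using AP'[OF len tp sig] am js'e by (simp add: js'_def)
  have aI: "a \<in> I" using s' js'e by (auto simp: Iv_def)
  have bI: "b \<in> I" using s' js'e by (auto simp: Iv_def)
  have tI: "t \<in> Iv I" using am am_sub by blast
  have "Some b \<in> b_map scale n prd V I e (inv \<tau> \<circ> \<sigma>) ((t # rest) ! 0) (Some a # take 0 (t # rest) @ drop (Suc 0) (t # rest))"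
    using am' bI unfolding b_map_def by (auto simp: Iv_def)
  moreover have "0 < n - 1" using n2 by simp
  ultimately have "Some b \<in> mu (True, Some a) (False, t # rest)"
    using sg unfolding mu_map_def by (simp only: prod.case bool.case) blast
  moreover have "admissible_X n I (False, t # rest)"
  proof -
    have "length rest = n - 2" using l' js'e by (metis diff_Suc_1 diff_diff_left length_Cons one_add_one)
    moreover have "set rest \<subseteq> Iv I" using s' js'e by auto
    ultimately show ?thesis using tI n2 by (auto simp: admissible_X_def)
  qed
  ultimately show ?thesis using aI bI unfolding step_def by blast
qed

end

context QM begin

definition PC :: "'i set \<Rightarrow> 'v set" where
  "PC C = {prd (map e ks) | ks. length ks = n \<and> set ks \<subseteq> C}"

definition Gen :: "'i set \<Rightarrow> 'v set" where
  "Gen C = PC C \<union> e ` C"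

abbreviation "Jc \<equiv> J_class scale n prd V I e"
abbreviation "Vc \<equiv> V_class scale n prd V I e"
abbreviation "Wc \<equiv> W_class scale n prd V I e"

lemma Vc_def': "Vc i = span (PC (cls i)) \<inter> V"
  by (simp add: V_class_def PC_def)

lemma Wc_def': "Wc i = span (e ` cls i)"
  by (simp add: W_class_def)

lemma Vc_sub: "subspace (Vc i)"
  unfolding Vc_def' using Vsub by (simp add: subspace_inter)

lemma Wc_sub: "subspace (Wc i)"
  unfolding Wc_def' by simp

lemma Jc_sub: "subspace (Jc i)"
  unfolding J_class_def using Vc_sub Wc_sub by (rule subspace_setsum2)

lemma Vc_J: "Vc i \<subseteq> Jc i"
  unfolding J_class_def setsum2_def using Wc_sub subspace_0 by force

lemma Wc_J: "Wc i \<subseteq> Jc i"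
  unfolding J_class_def setsum2_def using Vc_sub subspace_0 by force

lemma Jc_span: "Jc i \<subseteq> span (Gen (cls i))"
proof
  fix x assume "x \<in> Jc i"
  then obtain v w where vw: "x = v + w" "v \<in> Vc i" "w \<in> Wc i" unfolding J_class_def setsum2_def by blast
  have "v \<in> span (Gen (cls i))" using vw(2) span_mono[of "PC (cls i)" "Gen (cls i)"] unfolding Vc_def' Gen_def by blast
  moreover have "w \<in> span (Gen (cls i))" using vw(3) span_mono[of "e ` cls i" "Gen (cls i)"] unfolding Wc_def' Gen_def by blast
  ultimately show "x \<in> span (Gen (cls i))" using vw(1) span_add by simp
qed

definition jf :: "'v \<Rightarrow> 'i option" where
  "jf z = (if z \<in> e ` I then Some (inv_into I e z) else None)"

lemma jf_u: "z \<in> V \<union> e ` I \<Longrightarrow> z \<in> uu (jf z)"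
  by (auto simp: jf_def u_set_def f_inv_into_f)

lemma jf_Iv: "jf z \<in> Iv I"
  by (auto simp: jf_def Iv_def inv_into_into)

lemma jf_e: "a \<in> I \<Longrightarrow> jf (e a) = Some a"
  using einj by (simp add: jf_def)

lemma prd_PP:
  assumes "length zs = n" "\<forall>r<n. zs ! r \<in> V \<union> e ` I"
  shows "prd zs \<in> PP id (map jf zs)"
proof -
  have "prd zs = prod_perm n prd id zs" unfolding prod_perm_def using map_nth[of zs] assms(1) by simp
  moreover have "\<forall>r<n. zs ! r \<in> map uu (map jf zs) ! r" using assms jf_u by simp
  ultimately show ?thesis unfolding prod_sets_def using assms(1) by (blast intro: span_base)
qed

lemma conn_of_step: "step a b \<Longrightarrow> conn a b"
  using conn_step[of a a b] by (auto simp: step_def conn_alt)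

lemma E:
  assumes iI: "i \<in> I" and a: "a \<in> cls i" and len: "length zs = n" and r0: "r0 < n" "zs ! r0 = e a"
    and oth: "\<forall>r<n. zs ! r \<in> V \<union> e ` I"
  shows "prd zs \<in> Jc i"
proof (cases "prd zs = 0")
  case True then show ?thesis using Jc_sub subspace_0 by simp
next
  case False
  define js where "js = map jf zs"
  have lj: "length js = n" using len by (simp add: js_def)
  have sj: "set js \<subseteq> Iv I" using jf_Iv by (auto simp: js_def)
  have aI: "a \<in> I" using a cls_I by blast
  have jr0: "js ! r0 = Some a" using r0 len aI by (simp add: js_def jf_e)
  have pin: "prd zs \<in> PP id js" using prd_PP[OF len oth] by (simp add: js_def)
  have nz: "PP id js \<noteq> {0}" using pin False by blast
  obtain t where t: "am id js = {t}" using CL[OF lj sj permutes_id nz] by blast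
  show ?thesis
  proof (cases t)
    case (Some j)
    have j: "j \<in> I" "PP id js \<subseteq> line scale (e j)" using am_Some[of j id js] t Some by auto
    have "step a j" using S1[OF lj sj permutes_id] t Some r0(1) jr0 by simp
    then have "j \<in> cls i" using cls_step a by blast
    then have "line scale (e j) \<subseteq> Wc i" unfolding line_span Wc_def' by (intro span_mono) auto
    then show ?thesis using j(2) pin Wc_J by blast
  next
    case None
    have PV: "PP id js \<subseteq> V" using am_None[of id js] t None by auto
    have nN: "None \<notin> set js"
    proof
      assume "None \<in> set js"
      moreover have "\<exists>x\<in>set js. x \<noteq> None" using jr0 r0 lj by (metis nth_mem option.distinct(1))
      ultimately obtain j where "j \<in> I" "PP id js \<subseteq> line scale (e j)" using CL_mixed[OF lj sj _ _ permutes_id] by blast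
      then show False using line_V PV nz PP_nz by blast
    qed
    have allC: "the (js ! r) \<in> cls i \<and> zs ! r = e (the (js ! r))" if r: "r < n" for r
    proof -
      obtain b where b: "js ! r = Some b" using nN r lj by (metis nth_mem option.exhaust)
      have "zs ! r \<in> uu (js ! r)" using oth r len jf_u by (simp add: js_def)
      then have zr: "zs ! r = e b" using b by (simp add: u_set_def)
      have "b \<in> cls i"
      proof (cases "r = r0")
        case True then show ?thesis using b jr0 a by simp
      next
        case False
        have "step a b" using False by (intro S2[OF lj sj permutes_id t r0(1) r _ jr0 b]) auto
        then show ?thesis using cls_step a by blast
      qed
      then show ?thesis using b zr by simp
    qed
    define ks where "ks = map (\<lambda>r. the (js ! r)) [0..<n]"
    have "zs = map e ks" unfolding ks_def using len allC by (intro nth_equalityI) auto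
    moreover have "set ks \<subseteq> cls i" "length ks = n" using allC by (auto simp: ks_def)
    ultimately have "prd zs \<in> PC (cls i)" unfolding PC_def by blast
    then have "prd zs \<in> Vc i" unfolding Vc_def' using pin PV span_base by blast
    then show ?thesis using Vc_J by blast
  qed
qed

lemma E':
  assumes iI: "i \<in> I" and a: "a \<in> cls i" and len: "length zs = n" and r0: "r0 < n" "zs ! r0 = e a"
  shows "prd zs \<in> Jc i"
proof (rule MS[OF Jc_sub len, of "\<lambda>r. if r = r0 then {e a} else V \<union> e ` I"])
  show "\<forall>r<n. zs ! r \<in> span (if r = r0 then {e a} else V \<union> e ` I)"
    using r0 span_VE by (auto intro: span_base)
  fix ys assume ys: "length ys = n" "\<forall>r<n. ys ! r \<in> (if r = r0 then {e a} else V \<union> e ` I)"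
  have aI: "a \<in> I" using a cls_I by blast
  have "ys ! r0 = e a" using ys r0 by auto
  moreover have "\<forall>r<n. ys ! r \<in> V \<union> e ` I" using ys aI by (metis Un_iff image_eqI singletonD)
  ultimately show "prd ys \<in> Jc i" using E[OF iI a ys(1) r0(1)] by blast
qed

end

context QM begin

abbreviation "RHS xs ys \<equiv> {gLt_rhs_term n prd i j \<sigma>1 \<sigma>2 xs ys | i j \<sigma>1 \<sigma>2.
   i < n \<and> j < n \<and> \<sigma>1 permutes {..<n} \<and> \<sigma>2 permutes {..<n - 1}}"

lemma ID:
  assumes lx: "length xs = n" and ly: "length ys = n - 1" and k: "k < n"
    and hx: "\<forall>r<n. \<exists>g. xs ! r \<in> Lg g" and hy: "\<forall>s<n - 1. \<exists>g. ys ! s \<in> Lg g"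
  shows "gLt_lhs n prd k xs ys \<in> span (RHS xs ys)"
proof -
  obtain \<alpha> where \<alpha>: "\<forall>k<n. \<forall>xs ys dx dy.
          length xs = n \<longrightarrow> length ys = n - 1 \<longrightarrow>
          (\<forall>r<n. xs ! r \<in> Lg (dx r)) \<longrightarrow> (\<forall>s<n - 1. ys ! s \<in> Lg (dy s)) \<longrightarrow>
          gLt_lhs n prd k xs ys =
            (\<Sum>i<n. \<Sum>j<n. \<Sum>\<sigma>1\<in>{p. p permutes {..<n}}. \<Sum>\<sigma>2\<in>{p. p permutes {..<n - 1}}.
               scale (\<alpha> i j k \<sigma>1 \<sigma>2 *
                      color_factor \<epsilon> (case_sum dx dy) (gLt_lhs_labels n k) (gLt_rhs_labels n i j \<sigma>1 \<sigma>2))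
                     (gLt_rhs_term n prd i j \<sigma>1 \<sigma>2 xs ys))"
    using alg unfolding color_gLt_algebra_def by blast
  define dx where "dx r = (SOME g. xs ! r \<in> Lg g)" for r
  define dy where "dy s = (SOME g. ys ! s \<in> Lg g)" for s
  have "\<forall>r<n. xs ! r \<in> Lg (dx r)" using hx unfolding dx_def by (metis someI_ex)
  moreover have "\<forall>s<n - 1. ys ! s \<in> Lg (dy s)" using hy unfolding dy_def by (metis someI_ex)
  ultimately have eq: "gLt_lhs n prd k xs ys =
            (\<Sum>i<n. \<Sum>j<n. \<Sum>\<sigma>1\<in>{p. p permutes {..<n}}. \<Sum>\<sigma>2\<in>{p. p permutes {..<n - 1}}.
               scale (\<alpha> i j k \<sigma>1 \<sigma>2 *
                      color_factor \<epsilon> (case_sum dx dy) (gLt_lhs_labels n k) (gLt_rhs_labels n i j \<sigma>1 \<sigma>2))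
                     (gLt_rhs_term n prd i j \<sigma>1 \<sigma>2 xs ys))"
    using \<alpha> k lx ly by blast
  show ?thesis unfolding eq
    by (intro span_sum span_scale span_base) blast
qed

lemma OL_len: "i < n \<Longrightarrow> length (map f [0..<i] @ [x] @ map f [Suc i..<n]) = n"
  by simp

lemma OL_nth: "i < n \<Longrightarrow> q < n \<Longrightarrow> (map f [0..<i] @ [x] @ map f [Suc i..<n]) ! q = (if q = i then x else f q)"
  by (auto simp: nth_append nth_Cons' not_less)

lemma IL_len: "j < n \<Longrightarrow> length (map g [0..<j] @ [x] @ map g [j..<n - 1]) = n"
  by simp

lemma IL_nth: "j < n \<Longrightarrow> t < n - 1 \<Longrightarrow> (map g [0..<j] @ [x] @ map g [j..<n - 1]) ! (if t < j then t else Suc t) = g t"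
  by (auto simp: nth_append nth_Cons' not_less)

lemma IL_nthj: "(map g [0..<j] @ [x] @ L) ! j = x"
  by (simp add: nth_append)

lemma SPL:
  assumes len: "length zs = n" and r0: "r0 < n" and z: "zs ! r0 = prd xs"
  shows "prd zs = gLt_lhs n prd r0 xs (take r0 zs @ drop (Suc r0) zs)"
proof -
  have "take r0 (take r0 zs @ drop (Suc r0) zs) = take r0 zs" using len r0 by simp
  moreover have "drop r0 (take r0 zs @ drop (Suc r0) zs) = drop (Suc r0) zs" using len r0 by simp
  ultimately show ?thesis unfolding gLt_lhs_def using id_take_nth_drop[of r0 zs] len r0 z by simp
qed

lemma ys_len: "length zs = n \<Longrightarrow> r0 < n \<Longrightarrow> length (take r0 zs @ drop (Suc r0) zs) = n - 1"
  by simp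

lemma ys_nth: "length zs = n \<Longrightarrow> r0 < n \<Longrightarrow> s < n - 1 \<Longrightarrow>
    (take r0 zs @ drop (Suc r0) zs) ! s = zs ! (if s < r0 then s else Suc s)"
  by (auto simp: nth_append)

lemma ys_pos: "length zs = n \<Longrightarrow> r0 < n \<Longrightarrow> r < n \<Longrightarrow> r \<noteq> r0 \<Longrightarrow>
    (if r < r0 then r else r - 1) < n - 1 \<and> (take r0 zs @ drop (Suc r0) zs) ! (if r < r0 then r else r - 1) = zs ! r"
  by (auto simp: nth_append)

lemma PC_hom: "C \<subseteq> I \<Longrightarrow> p \<in> PC C \<Longrightarrow> \<exists>g. p \<in> Lg g"
proof -
  assume C: "C \<subseteq> I" and p: "p \<in> PC C"
  then obtain ks where ks: "p = prd (map e ks)" "length ks = n" "set ks \<subseteq> C" unfolding PC_def by blast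
  define ds where "ds r = (SOME g. e (ks ! r) \<in> Lg g)" for r
  have "\<forall>r<n. map e ks ! r \<in> Lg (ds r)"
  proof (intro allI impI)
    fix r assume r: "r < n"
    then have "ks ! r \<in> I" using ks C by (metis nth_mem subsetD)
    then have "\<exists>g. e (ks ! r) \<in> Lg g" using ehom by (simp add: homogeneous_def)
    then show "map e ks ! r \<in> Lg (ds r)" unfolding ds_def using r ks(2) by simp (rule someI_ex)
  qed
  then show ?thesis using deg[of "map e ks" ds] ks by auto
qed

lemma Gen_hom: "C \<subseteq> I \<Longrightarrow> g \<in> Gen C \<Longrightarrow> \<exists>d. g \<in> Lg d"
  unfolding Gen_def using PC_hom ehom by (auto simp: homogeneous_def)

lemma M:
  assumes iI: "i \<in> I" and len: "length zs = n" and r0: "r0 < n" and g: "zs ! r0 \<in> Gen (cls i)"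
    and oth: "\<forall>r<n. r \<noteq> r0 \<longrightarrow> zs ! r \<in> Hh"
  shows "prd zs \<in> Jc i"
proof (cases "zs ! r0 \<in> e ` cls i")
  case True
  then obtain a where "a \<in> cls i" "zs ! r0 = e a" by blast
  then show ?thesis using E'[OF iI _ len r0] by blast
next
  case False
  then obtain ks where ks: "zs ! r0 = prd (map e ks)" "length ks = n" "set ks \<subseteq> cls i"
    using g unfolding Gen_def PC_def by blast
  define xs where "xs = map e ks"
  define ys where "ys = take r0 zs @ drop (Suc r0) zs"
  have lx: "length xs = n" using ks by (simp add: xs_def)
  have ly: "length ys = n - 1" using len r0 by (simp add: ys_def)
  have hx: "\<forall>r<n. \<exists>g. xs ! r \<in> Lg g"
  proof (intro allI impI)
    fix r assume r: "r < n"
    then have "ks ! r \<in> I" using ks cls_I by (metis nth_mem subsetD)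
    then show "\<exists>g. xs ! r \<in> Lg g" using ehom r ks(2) by (simp add: homogeneous_def xs_def)
  qed
  have hy: "\<forall>s<n - 1. \<exists>g. ys ! s \<in> Lg g"
  proof (intro allI impI)
    fix s assume s: "s < n - 1"
    define r where "r = (if s < r0 then s else Suc s)"
    have r: "r < n" "r \<noteq> r0" using s r0 by (auto simp: r_def)
    have "ys ! s = zs ! r" unfolding ys_def r_def using ys_nth[OF len r0 s] .
    then show "\<exists>g. ys ! s \<in> Lg g" using oth r Hh_hom by simp
  qed
  have "prd zs = gLt_lhs n prd r0 xs ys" unfolding xs_def ys_def using SPL[OF len r0 ks(1)] .
  also have "\<dots> \<in> span (RHS xs ys)" using ID[OF lx ly r0 hx hy] .
  also have "span (RHS xs ys) \<subseteq> Jc i"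
  proof (rule span_minimal[OF _ Jc_sub], rule subsetI)
    fix y assume "y \<in> RHS xs ys"
    then obtain i' j \<sigma>1 \<sigma>2 where y: "y = gLt_rhs_term n prd i' j \<sigma>1 \<sigma>2 xs ys" "i' < n" "j < n"
      "\<sigma>1 permutes {..<n}" "\<sigma>2 permutes {..<n - 1}" by blast
    define q where "q = (if i' = 0 then 1 else 0 :: nat)"
    have q: "q < n" "q \<noteq> i'" using n2 by (auto simp: q_def)
    define OL where "OL = map (\<lambda>t. xs ! \<sigma>1 t) [0..<i'] @ [prd (map (\<lambda>t. ys ! \<sigma>2 t) [0..<j] @ [xs ! \<sigma>1 i'] @ map (\<lambda>t. ys ! \<sigma>2 t) [j..<n - 1])] @ map (\<lambda>t. xs ! \<sigma>1 t) [Suc i'..<n]"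
    have yO: "y = prd OL" unfolding y(1) OL_def gLt_rhs_term_def by simp
    have lO: "length OL = n" unfolding OL_def using y(2) by simp
    have "OL ! q = xs ! \<sigma>1 q" unfolding OL_def using OL_nth[OF y(2) q(1), of "\<lambda>t. xs ! \<sigma>1 t"] q(2) by simp
    then have Oq: "OL ! q = e (ks ! \<sigma>1 q)" using perm_lt[OF y(4) q(1)] ks(2) by (simp add: xs_def)
    have "ks ! \<sigma>1 q \<in> cls i" using ks perm_lt[OF y(4) q(1)] by (metis nth_mem subsetD)
    then show "y \<in> Jc i" using E'[OF iI _ lO q(1) Oq] yO by simp
  qed
  finally show ?thesis .
qed

lemma Final2:
  assumes iI: "i \<in> I" and len: "length zs = n" and r0: "r0 < n" and z: "zs ! r0 \<in> Jc i"
  shows "prd zs \<in> Jc i"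
proof (rule MS[OF Jc_sub len, of "\<lambda>r. if r = r0 then Gen (cls i) else Hh"])
  show "\<forall>r<n. zs ! r \<in> span (if r = r0 then Gen (cls i) else Hh)"
    using z Jc_span span_Hh by auto
  fix ys assume ys: "length ys = n" "\<forall>r<n. ys ! r \<in> (if r = r0 then Gen (cls i) else Hh)"
  show "prd ys \<in> Jc i" by (rule M[OF iI ys(1) r0]) (use ys(2) r0 in auto)
qed

lemma pp_pos:
  assumes sig: "\<sigma> permutes {..<n}" and len: "length xs = n" and r: "r < n"
  shows "inv \<sigma> r < n" "map (\<lambda>t. xs ! \<sigma> t) [0..<n] ! (inv \<sigma> r) = xs ! r"
    "prod_perm n prd \<sigma> xs = prd (map (\<lambda>t. xs ! \<sigma> t) [0..<n])"
  using perm_lt[OF permutes_inv[OF sig] r] permutes_inverses(1)[OF sig]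
  by (auto simp: prod_perm_def)

lemma ideal_prod:
  assumes iI: "i \<in> I" and sig: "\<sigma> permutes {..<n}"
  shows "prod_sets scale n prd \<sigma> (Jc i # replicate (n - 1) UNIV) \<subseteq> Jc i"
  unfolding prod_sets_def
proof (rule span_minimal[OF _ Jc_sub], rule subsetI)
  fix y assume "y \<in> {prod_perm n prd \<sigma> xs |xs. length xs = n \<and> (\<forall>r<n. xs ! r \<in> (Jc i # replicate (n - 1) UNIV) ! r)}"
  then obtain xs where xs: "y = prod_perm n prd \<sigma> xs" "length xs = n" "\<forall>r<n. xs ! r \<in> (Jc i # replicate (n - 1) UNIV) ! r"
    by blast
  have n0: "0 < n" using n2 by simp
  have x0: "xs ! 0 \<in> Jc i" using xs(3) n0 by auto
  note pp = pp_pos[OF sig xs(2) n0]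
  show "y \<in> Jc i" unfolding xs(1) pp(3)
    by (rule Final2[OF iI _ pp(1)]) (use pp(2) x0 in auto)
qed

end

context QM begin

lemma Z1E:
  assumes ab: "a \<in> I" "b \<in> I" "\<not> conn a b" and len: "length zs = n" and r: "r0 < n" "r1 < n" "r0 \<noteq> r1"
    and z: "zs ! r0 = e a" "zs ! r1 = e b" and oth: "\<forall>r<n. zs ! r \<in> V \<union> e ` I"
  shows "prd zs = 0"
proof (rule ccontr)
  assume nz: "prd zs \<noteq> 0"
  define js where "js = map jf zs"
  have lj: "length js = n" using len by (simp add: js_def)
  have sj: "set js \<subseteq> Iv I" using jf_Iv by (auto simp: js_def)
  have j0: "js ! r0 = Some a" using r z len ab by (simp add: js_def jf_e)
  have j1: "js ! r1 = Some b" using r z len ab by (simp add: js_def jf_e)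
  have pin: "prd zs \<in> PP id js" using prd_PP[OF len oth] by (simp add: js_def)
  have "PP id js \<noteq> {0}" using pin nz by blast
  then obtain t where t: "am id js = {t}" using CL[OF lj sj permutes_id] by blast
  have "step a b" using S2[OF lj sj permutes_id t r j0 j1] .
  then show False using ab(3) conn_of_step by blast
qed

lemma Z1:
  assumes ab: "a \<in> I" "b \<in> I" "\<not> conn a b" and len: "length zs = n" and r: "r0 < n" "r1 < n" "r0 \<noteq> r1"
    and z: "zs ! r0 = e a" "zs ! r1 = e b"
  shows "prd zs = 0"
proof -
  let ?A = "\<lambda>r. if r = r0 then {e a} else if r = r1 then {e b} else V \<union> e ` I"
  have "prd zs \<in> {0}"
  proof (rule MS[OF subspace_single_0 len, of ?A])
    show "\<forall>r<n. zs ! r \<in> span (?A r)" using z span_VE by (auto intro: span_base)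
    fix ys assume ys: "length ys = n" "\<forall>r<n. ys ! r \<in> ?A r"
    have "ys ! r0 = e a" "ys ! r1 = e b" using ys r by auto
    moreover have "\<forall>r<n. ys ! r \<in> V \<union> e ` I"
    proof (intro allI impI)
      fix r assume "r < n"
      then show "ys ! r \<in> V \<union> e ` I" using ys(2) ab by (cases "r = r0"; cases "r = r1") auto
    qed
    ultimately show "prd ys \<in> {0}" using Z1E[OF ab ys(1) r] by simp
  qed
  then show ?thesis by simp
qed

lemma ZT:
  assumes len: "length zs = n" and r0: "r0 < n" and r1: "r1 < n" "r1 \<noteq> r0"
    and ks: "zs ! r0 = prd (map e ks)" "length ks = n" "set ks \<subseteq> I"
    and hom: "\<forall>r<n. r \<noteq> r0 \<longrightarrow> (\<exists>g. zs ! r \<in> Lg g)"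
    and Q: "\<And>c IL j p. c \<in> set ks \<Longrightarrow> length IL = n \<Longrightarrow> j < n \<Longrightarrow> p < n \<Longrightarrow> j \<noteq> p \<Longrightarrow>
              IL ! j = e c \<Longrightarrow> IL ! p = zs ! r1 \<Longrightarrow> prd IL = 0"
  shows "prd zs = 0"
proof -
  define xs where "xs = map e ks"
  define ys where "ys = take r0 zs @ drop (Suc r0) zs"
  have lx: "length xs = n" using ks by (simp add: xs_def)
  have ly: "length ys = n - 1" using len r0 by (simp add: ys_def)
  have hx: "\<forall>r<n. \<exists>g. xs ! r \<in> Lg g"
  proof (intro allI impI)
    fix r assume r: "r < n"
    then have "ks ! r \<in> I" using ks by (metis nth_mem subsetD)
    then show "\<exists>g. xs ! r \<in> Lg g" using ehom r ks(2) by (simp add: homogeneous_def xs_def)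
  qed
  have hy: "\<forall>s<n - 1. \<exists>g. ys ! s \<in> Lg g"
  proof (intro allI impI)
    fix s assume s: "s < n - 1"
    define r where "r = (if s < r0 then s else Suc s)"
    have r: "r < n" "r \<noteq> r0" using s r0 by (auto simp: r_def)
    have "ys ! s = zs ! r" unfolding ys_def r_def using ys_nth[OF len r0 s] .
    then show "\<exists>g. ys ! s \<in> Lg g" using hom r by simp
  qed
  define q0 where "q0 = (if r1 < r0 then r1 else r1 - 1)"
  have q0: "q0 < n - 1" "ys ! q0 = zs ! r1" using ys_pos[OF len r0 r1] unfolding ys_def q0_def by auto
  have "prd zs = gLt_lhs n prd r0 xs ys" unfolding xs_def ys_def using SPL[OF len r0 ks(1)] .
  also have "\<dots> \<in> span (RHS xs ys)" using ID[OF lx ly r0 hx hy] .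
  also have "span (RHS xs ys) \<subseteq> {0}"
  proof (rule span_minimal[OF _ subspace_single_0], rule subsetI)
    fix y assume "y \<in> RHS xs ys"
    then obtain i' j \<sigma>1 \<sigma>2 where y: "y = gLt_rhs_term n prd i' j \<sigma>1 \<sigma>2 xs ys" "i' < n" "j < n"
      "\<sigma>1 permutes {..<n}" "\<sigma>2 permutes {..<n - 1}" by blast
    define IL where "IL = map (\<lambda>t. ys ! \<sigma>2 t) [0..<j] @ [xs ! \<sigma>1 i'] @ map (\<lambda>t. ys ! \<sigma>2 t) [j..<n - 1]"
    define OL where "OL = map (\<lambda>t. xs ! \<sigma>1 t) [0..<i'] @ [prd IL] @ map (\<lambda>t. xs ! \<sigma>1 t) [Suc i'..<n]"
    have yO: "y = prd OL" unfolding y(1) OL_def IL_def gLt_rhs_term_def by simp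
    have lO: "length OL = n" unfolding OL_def using y(2) by simp
    have lI: "length IL = n" unfolding IL_def using y(3) by simp
    have Oi: "OL ! i' = prd IL" unfolding OL_def by (simp add: nth_append)
    define t0 where "t0 = inv \<sigma>2 q0"
    have t0: "t0 < n - 1" "\<sigma>2 t0 = q0"
      using perm_lt[OF permutes_inv[OF y(5)] q0(1)] permutes_inverses(1)[OF y(5)] by (auto simp: t0_def)
    define p where "p = (if t0 < j then t0 else Suc t0)"
    have pj: "p \<noteq> j" "p < n" using t0 y(3) by (auto simp: p_def)
    have Ip: "IL ! p = zs ! r1" unfolding IL_def p_def
      using IL_nth[OF y(3) t0(1), of "\<lambda>t. ys ! \<sigma>2 t" "xs ! \<sigma>1 i'"] t0(2) q0(2) by simp
    have Ij: "IL ! j = e (ks ! \<sigma>1 i')" unfolding IL_def using perm_lt[OF y(4) y(2)] ks(2)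
      by (simp add: nth_append xs_def)
    have "ks ! \<sigma>1 i' \<in> set ks" using perm_lt[OF y(4) y(2)] ks(2) by simp
    then have "prd IL = 0" using Q[OF _ lI y(3) pj(2) pj(1)[symmetric] Ij Ip] by simp
    then have "prd OL = 0" using prd_zero[OF lO y(2)] Oi by simp
    then show "y \<in> {0}" using yO by simp
  qed
  finally show ?thesis by simp
qed

lemma Z2:
  assumes aI: "a \<in> I" and C: "C \<subseteq> I" and nc: "\<forall>c\<in>C. \<not> conn a c" and len: "length zs = n"
    and r: "r0 < n" "r1 < n" "r0 \<noteq> r1" and z: "zs ! r0 = e a" "zs ! r1 \<in> span (Gen C)"
  shows "prd zs = 0"
proof -
  let ?A = "\<lambda>r. if r = r0 then {e a} else if r = r1 then Gen C else Hh"
  have "prd zs \<in> {0}"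
  proof (rule MS[OF subspace_single_0 len, of ?A])
    show "\<forall>r<n. zs ! r \<in> span (?A r)" using z span_Hh r(3) by (auto intro: span_base)
    fix ys assume ys: "length ys = n" "\<forall>r<n. ys ! r \<in> ?A r"
    have y0: "ys ! r0 = e a" and y1: "ys ! r1 \<in> Gen C" using ys r by auto
    show "prd ys \<in> {0}"
    proof (cases "ys ! r1 \<in> e ` C")
      case True
      then obtain c where c: "c \<in> C" "ys ! r1 = e c" by blast
      have "prd ys = 0" using Z1[OF aI _ _ ys(1) r y0 c(2)] c C nc by blast
      then show ?thesis by simp
    next
      case False
      then obtain ks where ks: "ys ! r1 = prd (map e ks)" "length ks = n" "set ks \<subseteq> C"
        using y1 unfolding Gen_def PC_def by blast
      have hom: "\<forall>r<n. r \<noteq> r1 \<longrightarrow> (\<exists>g. ys ! r \<in> Lg g)"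
      proof (intro allI impI)
        fix r assume "r < n" "r \<noteq> r1"
        then show "\<exists>g. ys ! r \<in> Lg g"
          using ys(2) y0 aI ehom Hh_hom by (cases "r = r0") (auto simp: homogeneous_def)
      qed
      have "prd ys = 0"
      proof (rule ZT[OF ys(1) r(2) r(1) r(3) ks(1,2) _ hom])
        show "set ks \<subseteq> I" using ks C by blast
        fix c IL j p assume h: "c \<in> set ks" "length IL = n" "j < n" "p < n" "j \<noteq> p" "IL ! j = e c" "IL ! p = ys ! r0"
        have cI: "c \<in> I" using h ks C by blast
        have "\<not> conn c a" using nc h(1) ks(3) conn_sym by blast
        then show "prd IL = 0" using Z1[OF cI aI _ h(2,3,4,5,6)] h(7) y0 by simp
      qed
      then show ?thesis by simp
    qed
  qed
  then show ?thesis by simp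
qed

lemma Z3:
  assumes C1: "C1 \<subseteq> I" and C2: "C2 \<subseteq> I" and nc: "\<forall>c1\<in>C1. \<forall>c2\<in>C2. \<not> conn c1 c2" and len: "length zs = n"
    and r: "r0 < n" "r1 < n" "r0 \<noteq> r1" and z: "zs ! r0 \<in> span (Gen C1)" "zs ! r1 \<in> span (Gen C2)"
  shows "prd zs = 0"
proof -
  let ?A = "\<lambda>r. if r = r0 then Gen C1 else if r = r1 then Gen C2 else Hh"
  have "prd zs \<in> {0}"
  proof (rule MS[OF subspace_single_0 len, of ?A])
    show "\<forall>r<n. zs ! r \<in> span (?A r)" using z span_Hh r(3) by auto
    fix ys assume ys: "length ys = n" "\<forall>r<n. ys ! r \<in> ?A r"
    have y0: "ys ! r0 \<in> Gen C1" and y1: "ys ! r1 \<in> Gen C2" using ys r by auto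
    show "prd ys \<in> {0}"
    proof (cases "ys ! r0 \<in> e ` C1")
      case True
      then obtain c where c: "c \<in> C1" "ys ! r0 = e c" by blast
      have "prd ys = 0" using Z2[OF _ C2 _ ys(1) r c(2)] c C1 nc y1 span_base by blast
      then show ?thesis by simp
    next
      case False
      then obtain ks where ks: "ys ! r0 = prd (map e ks)" "length ks = n" "set ks \<subseteq> C1"
        using y0 unfolding Gen_def PC_def by blast
      have hom: "\<forall>r<n. r \<noteq> r0 \<longrightarrow> (\<exists>g. ys ! r \<in> Lg g)"
      proof (intro allI impI)
        fix r assume "r < n" "r \<noteq> r0"
        then show "\<exists>g. ys ! r \<in> Lg g"
          using ys(2) y1 Gen_hom[OF C2] Hh_hom by (cases "r = r1") auto
      qed
      have "prd ys = 0"
      proof (rule ZT[OF ys(1) r(1) r(2) r(3)[symmetric] ks(1,2) _ hom])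
        show "set ks \<subseteq> I" using ks C1 by blast
        fix c IL j p assume h: "c \<in> set ks" "length IL = n" "j < n" "p < n" "j \<noteq> p" "IL ! j = e c" "IL ! p = ys ! r1"
        have cI: "c \<in> I" using h ks C1 by blast
        have "\<forall>c2\<in>C2. \<not> conn c c2" using nc h(1) ks(3) by blast
        then show "prd IL = 0" using Z2[OF cI C2 _ h(2,3,4,5,6)] h(7) y1 span_base by simp
      qed
      then show ?thesis by simp
    qed
  qed
  then show ?thesis by simp
qed

lemma claim3:
  assumes iI: "i \<in> I" and hI: "h \<in> I" and ne: "cls i \<noteq> cls h" and sig: "\<sigma> permutes {..<n}"
  shows "prod_sets scale n prd \<sigma> (Jc i # Jc h # replicate (n - 2) UNIV) = {0}"
proof -
  have nc: "\<forall>c1\<in>cls i. \<forall>c2\<in>cls h. \<not> conn c1 c2"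
  proof (intro ballI notI)
    fix c1 c2 assume c: "c1 \<in> cls i" "c2 \<in> cls h" "conn c1 c2"
    then have "c2 \<in> cls i" using conn_trans by (auto simp: conn_class_def)
    then show False using cls_eq c(2) ne by blast
  qed
  let ?G = "{prod_perm n prd \<sigma> xs |xs. length xs = n \<and> (\<forall>r<n. xs ! r \<in> (Jc i # Jc h # replicate (n - 2) UNIV) ! r)}"
  have "?G \<subseteq> {0}"
  proof
    fix y assume "y \<in> ?G"
    then obtain xs where xs: "y = prod_perm n prd \<sigma> xs" "length xs = n"
      "\<forall>r<n. xs ! r \<in> (Jc i # Jc h # replicate (n - 2) UNIV) ! r" by blast
    have n0: "0 < n" and n1: "1 < n" using n2 by auto
    have x0: "xs ! 0 \<in> Jc i" using xs(3) n0 by auto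
    have x1: "xs ! 1 \<in> Jc h" using xs(3)[rule_format, OF n1] by simp
    note p0 = pp_pos[OF sig xs(2) n0] and p1 = pp_pos[OF sig xs(2) n1]
    have ne01: "inv \<sigma> 0 \<noteq> inv \<sigma> 1" using permutes_inverses(1)[OF sig, of 0] permutes_inverses(1)[OF sig, of 1] by (metis zero_neq_one)
    have "prd (map (\<lambda>t. xs ! \<sigma> t) [0..<n]) = 0"
      by (rule Z3[OF cls_I cls_I nc _ p0(1) p1(1) ne01]) (use p0(2) p1(2) x0 x1 Jc_span in auto)
    then show "y \<in> {0}" using xs(1) p0(3) by simp
  qed
  then have "span ?G \<subseteq> {0}" by (intro span_minimal) auto
  then show ?thesis unfolding prod_sets_def using span_zero by blast
qed

lemma claim2:
  assumes iI: "i \<in> I"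
  shows "color_gLt_ideal scale Lg n prd (Jc i) \<and> inherited_qm_basis scale Lg V W I e (Jc i)"
proof -
  have gV: "graded_subspace scale Lg (Vc i)" unfolding Vc_def'
    by (rule inter_graded[OF span_graded Vgs]) (use PC_hom cls_I in blast)
  have gW: "graded_subspace scale Lg (Wc i)" unfolding Wc_def'
    by (rule span_graded) (use ehom cls_I in \<open>auto simp: homogeneous_def\<close>)
  have gJ: "graded_subspace scale Lg (Jc i)" unfolding J_class_def using gV gW by (rule setsum2_graded)
  have ideal: "color_gLt_ideal scale Lg n prd (Jc i)"
    unfolding color_gLt_ideal_def using gJ ideal_prod[OF iI] by blast
  have VV: "Vc i \<subseteq> V" unfolding Vc_def' by blast
  have WW: "Wc i \<subseteq> W" unfolding Wc_def' using Wspan span_mono[of "e ` cls i" "e ` I"] cls_I by blast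
  have Wnz: "Wc i \<noteq> {0}"
  proof
    assume "Wc i = {0}"
    moreover have "e i \<in> Wc i" unfolding Wc_def' using cls_self[OF iI] by (auto intro: span_base)
    ultimately show False using e_nz[OF iI] by simp
  qed
  have ind: "\<not> dependent (e ` cls i)" using eind dependent_mono[of "e ` cls i" "e ` I"] cls_I by blast
  have "Vc i \<inter> Wc i \<subseteq> {0}" using VV WW VW0 by blast
  moreover have "0 \<in> Vc i" "0 \<in> Wc i" using Vc_sub Wc_sub by (simp_all add: subspace_0)
  ultimately have "Vc i \<inter> Wc i = {0}" by blast
  then have ds: "direct_sum_eq (Jc i) (Vc i) (Wc i)"
    unfolding direct_sum_eq_def J_class_def by simp
  have "inherited_qm_basis scale Lg V W I e (Jc i)"
    unfolding inherited_qm_basis_def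
    apply (rule exI[of _ "Vc i"], rule exI[of _ "Wc i"], rule exI[of _ "cls i"])
    using gV VV gW WW Wnz cls_I ind Wc_def' ds by simp
  with ideal show ?thesis by blast
qed

lemma claim1:
  assumes U: "subspace U" and ds: "direct_sum_eq V U (span (\<Union>i\<in>I. Vc i))"
  shows "direct_sum_eq UNIV U (span (\<Union>i\<in>I. Jc i))"
proof -
  define SV where "SV = span (\<Union>i\<in>I. Vc i)"
  define SJ where "SJ = span (\<Union>i\<in>I. Jc i)"
  have V: "V = setsum2 U SV" and UV0: "U \<inter> SV = {0}" using ds by (auto simp: direct_sum_eq_def SV_def)
  have UV: "U \<subseteq> V"
  proof
    fix u assume "u \<in> U"
    then have "u + 0 \<in> setsum2 U SV" unfolding setsum2_def SV_def using span_zero by blast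
    then show "u \<in> V" using V by simp
  qed
  have SVV: "SV \<subseteq> V" unfolding SV_def using Vsub Vc_def' by (intro span_minimal) auto
  have SVJ: "SV \<subseteq> SJ" unfolding SV_def SJ_def using Vc_J by (intro span_mono) blast
  have WJ: "W \<subseteq> SJ"
  proof -
    have "e ` I \<subseteq> (\<Union>i\<in>I. Jc i)"
    proof
      fix x assume "x \<in> e ` I"
      then obtain i where i: "i \<in> I" "x = e i" by blast
      have "e i \<in> Wc i" unfolding Wc_def' using cls_self[OF i(1)] by (auto intro: span_base)
      then show "x \<in> (\<Union>i\<in>I. Jc i)" using Wc_J i by blast
    qed
    then show ?thesis unfolding SJ_def using Wspan span_mono by blast
  qed
  have U1: "UNIV = setsum2 U SJ"
  proof -
    have "x \<in> setsum2 U SJ" for x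
    proof -
    have "x \<in> setsum2 V W" using VW by simp
    then obtain v w where vw: "x = v + w" "v \<in> V" "w \<in> W" unfolding setsum2_def by blast
    then obtain u s where us: "v = u + s" "u \<in> U" "s \<in> SV" using V unfolding setsum2_def by blast
    have sJ: "s \<in> SJ" using SVJ us(3) by blast
    have wJ: "w \<in> SJ" using WJ vw(3) by blast
    have swJ: "s + w \<in> SJ" using span_add[of s "\<Union>i\<in>I. Jc i" w] sJ wJ unfolding SJ_def by blast
    have "x = u + (s + w)" using vw(1) us(1) by (simp add: add.assoc)
    then show "x \<in> setsum2 U SJ" unfolding setsum2_def using us(2) swJ by blast
    qed
    then show ?thesis by auto
  qed
  have SJsub: "SJ \<subseteq> setsum2 SV W"
  proof -
    have "(\<Union>i\<in>I. Jc i) \<subseteq> setsum2 SV W"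
    proof
      fix x assume "x \<in> (\<Union>i\<in>I. Jc i)"
      then obtain i where i: "i \<in> I" "x \<in> Jc i" by blast
      then obtain v w where vw: "x = v + w" "v \<in> Vc i" "w \<in> Wc i" unfolding J_class_def setsum2_def by blast
      have "v \<in> SV" unfolding SV_def using vw(2) i(1) by (blast intro: span_base)
      moreover have "w \<in> W" using vw(3) cls_I Wspan span_mono[of "e ` cls i" "e ` I"] unfolding Wc_def' by blast
      ultimately show "x \<in> setsum2 SV W" unfolding setsum2_def using vw(1) by blast
    qed
    moreover have "subspace (setsum2 SV W)" unfolding SV_def using Wsub by (intro subspace_setsum2) auto
    ultimately show ?thesis unfolding SJ_def by (rule span_minimal)
  qed
  have U2: "U \<inter> SJ = {0}"
  proof
    show "U \<inter> SJ \<subseteq> {0}"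
    proof
      fix u assume u: "u \<in> U \<inter> SJ"
      then obtain s w where sw: "u = s + w" "s \<in> SV" "w \<in> W" using SJsub unfolding setsum2_def by blast
      have "w = u - s" using sw(1) by simp
      moreover have "u \<in> V" using u UV by blast
      moreover have "s \<in> V" using SVV sw(2) by blast
      ultimately have "w \<in> V" using Vsub subspace_diff by simp
      then have "w \<in> V \<inter> W" using sw(3) by blast
      then have "w = 0" using VW0 by blast
      then have "u = s" using sw(1) by simp
      then show "u \<in> {0}" using u sw(2) UV0 by blast
    qed
    have "0 \<in> U" using U by (rule subspace_0)
    moreover have "0 \<in> SJ" unfolding SJ_def by (rule span_zero)
    ultimately show "{0} \<subseteq> U \<inter> SJ" by blast
  qed
  show ?thesis unfolding direct_sum_eq_def using U1 U2 by (simp add: SJ_def)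
qed

end

theorem theorem3p12:
  fixes scale :: "'f::field \<Rightarrow> 'v::ab_group_add \<Rightarrow> 'v"
    and Lg :: "'g::ab_group_add \<Rightarrow> 'v set"
    and \<epsilon> :: "'g \<Rightarrow> 'g \<Rightarrow> 'f"
    and n :: nat
    and prd :: "'v list \<Rightarrow> 'v"
    and V W :: "'v set"
    and I :: "'i set"
    and e :: "'i \<Rightarrow> 'v"
  assumes n2: "n \<ge> 2"
    and eps: "bicharacter \<epsilon>"
    and alg: "color_gLt_algebra scale Lg \<epsilon> n prd"
    and qmb: "qm_basis scale Lg n prd V W I e"
  shows
    "(\<forall>U. module.subspace scale U \<and>
          direct_sum_eq V U (module.span scale (\<Union>i\<in>I. V_class scale n prd V I e i)) \<longrightarrow>
          direct_sum_eq UNIV U (module.span scale (\<Union>i\<in>I. J_class scale n prd V I e i)))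
     \<and> (\<forall>i\<in>I. color_gLt_ideal scale Lg n prd (J_class scale n prd V I e i)
              \<and> inherited_qm_basis scale Lg V W I e (J_class scale n prd V I e i))
     \<and> (\<forall>i\<in>I. \<forall>h\<in>I. conn_class scale n prd V I e i \<noteq> conn_class scale n prd V I e h \<longrightarrow>
          (\<forall>\<sigma>. \<sigma> permutes {..<n} \<longrightarrow>
             prod_sets scale n prd \<sigma>
               (J_class scale n prd V I e i # J_class scale n prd V I e h # replicate (n - 2) UNIV) = {0}))"
proof -
  interpret QM scale Lg \<epsilon> n prd V W I e
    using n2 alg qmb by unfold_locales
  show ?thesis using claim1 claim2 claim3 by blast
qed

end
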